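(* Let $n\ge 2$ and $s=(2,3,\ldots,n)$ (a sequence of length $n-1$). Then the $s$-derangement polynomial satisfies $d_{n-1}^s(z)=d_n(z)$, the classical derangement polynomial. Moreover, the local $h$-polynomial of the barycentric subdivision of the $(n-1)$-simplex $2^{[n]}$ equals the local $h^\ast$-polynomial $\ell^\ast(P_{n-1}^s;z)$ of the $s$-lecture hall simplex $P_{n-1}^s$.
   Context: $P_{m}^s=\{x\in\mathbb{R}^{m}: 0\le x_1/s_1\le\cdots\le x_{m}/s_{m}\le 1\}$ for $s=(s_1,\ldots,s_m)$; for a lattice $d$-simplex $\Delta=\mathrm{conv}(v^{(0)},\ldots,v^{(d)})\subset\mathbb{R}^m$, $\ell^\ast(\Delta;z)=\sum_{x\in\Pi^\circ_\Delta\cap\mathbb{Z}^{m+1}}z^{x_{m+1}}$ with $\Pi^\circ_\Delta=\{\sum_i\lambda_i(v^{(i)},1): 0<\lambda_i<1\}$; $d_m^s(z):=\ell^\ast(P_m^s;z)$. The derangement polynomial is $d_n(z)=\sum_{\pi\in\mathfrak{D}_n}z^{\mathrm{exc}(\pi)}$, where $\mathfrak{D}_n$ is the set of permutations of $[n]$ without fixed points and $\mathrm{exc}(\pi)=|\{i:\pi_i>i\}|$. For a $(d-1)$-dimensional simplicial complex $\Omega$ with $f_{i-1}$ faces of dimension $i-1$ ($f_{-1}=1$), $h(\Omega;z)=\sum_{i=0}^d f_{i-1}z^i(1-z)^{d-i}$. If $\Omega$ is a subdivision of the simplex $2^V$, $|V|=n$, and for $F\subseteq V$ $\Omega_F$ denotes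 the restriction of $\Omega$ to the face $F$ (the subcomplex subdividing $2^F$; $h(\Omega_\emptyset;z)=1$), the local $h$-polynomial is $\ell_V(\Omega_V;z)=\sum_{F\subseteq V}(-1)^{n-|F|}h(\Omega_F;z)$. *)

theory Defs
  imports "HOL-Computational_Algebra.Polynomial" "HOL-Combinatorics.Permutations"
begin

text \<open>A lattice d-simplex in R^m is given by its vertices v i (i = 0..d), with
  v i j the (j+1)-st coordinate (j < m).  The coefficient of z^k in l^*(Delta;z)
  counts the lattice points x in Z^(m+1) of the open fundamental parallelepiped
  with last coordinate x_(m+1) = k.  The first m coordinates are the list x.\<close>

definition lstar_coeff :: "nat \<Rightarrow> nat \<Rightarrow> (nat \<Rightarrow> nat \<Rightarrow> int) \<Rightarrow> int \<Rightarrow> nat" where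
  "lstar_coeff m d v k = card {x :: int list. length x = m \<and>
     (\<exists>c :: nat \<Rightarrow> real. (\<forall>i\<le>d. 0 < c i \<and> c i < 1) \<and>
        (\<forall>j<m. real_of_int (x ! j) = (\<Sum>i\<le>d. c i * real_of_int (v i j))) \<and>
        real_of_int k = (\<Sum>i\<le>d. c i))}"

text \<open>Since the last coordinate is a sum of d+1 numbers in (0,1), only
  0 \<le> k \<le> d contribute; summing over 0..d+1 loses nothing.\<close>
definition lstar :: "nat \<Rightarrow> nat \<Rightarrow> (nat \<Rightarrow> nat \<Rightarrow> int) \<Rightarrow> int poly" where
  "lstar m d v = (\<Sum>k\<le>d+1. monom (int (lstar_coeff m d v (int k))) k)"

text \<open>s is 0-indexed: s j is s_(j+1).  P_m^s has vertices v^(i), i = 0..m, where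
  v^(i)_(j+1) = 0 if j+1 \<le> i and s_(j+1) otherwise.\<close>
definition lecture_hall_vertex :: "(nat \<Rightarrow> int) \<Rightarrow> nat \<Rightarrow> nat \<Rightarrow> int" where
  "lecture_hall_vertex s i j = (if i \<le> j then s j else 0)"

definition lecture_hall_simplex :: "nat \<Rightarrow> (nat \<Rightarrow> int) \<Rightarrow> (nat \<Rightarrow> real) set" where
  "lecture_hall_simplex m s = {x. (\<forall>j\<ge>m. x j = 0) \<and> 0 \<le> x 0 / real_of_int (s 0) \<and>
      (\<forall>j. Suc j < m \<longrightarrow> x j / real_of_int (s j) \<le> x (Suc j) / real_of_int (s (Suc j))) \<and> x (m - 1) / real_of_int (s (m - 1)) \<le> 1}"

definition s_derangement_poly :: "nat \<Rightarrow> (nat \<Rightarrow> int) \<Rightarrow> int poly" where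
  "s_derangement_poly m s = lstar m m (lecture_hall_vertex s)"

definition exc :: "nat \<Rightarrow> (nat \<Rightarrow> nat) \<Rightarrow> nat" where
  "exc n \<pi> = card {i \<in> {1..n}. \<pi> i > i}"

definition derangements :: "nat \<Rightarrow> (nat \<Rightarrow> nat) set" where
  "derangements n = {\<pi>. \<pi> permutes {1..n} \<and> (\<forall>i\<in>{1..n}. \<pi> i \<noteq> i)}"

definition derangement_poly :: "nat \<Rightarrow> int poly" where
  "derangement_poly n = (\<Sum>\<pi>\<in>derangements n. monom 1 (exc n \<pi>))"

text \<open>A simplicial complex is given by its set of faces (finite vertex sets),
  d is such that the complex is (d-1)-dimensional; f_(i-1) = number of faces with i vertices.\<close>
definition h_poly :: "'a set set \<Rightarrow> nat \<Rightarrow> int poly" where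
  "h_poly \<Omega> d = (\<Sum>i\<le>d. smult (int (card {G\<in>\<Omega>. card G = i})) (monom 1 i * [:1, -1:] ^ (d - i)))"

text \<open>Omega F is the restriction of the subdivision to the face F of 2^V; it
  subdivides 2^F and so has dimension |F|-1.\<close>
definition local_h :: "'a set \<Rightarrow> ('a set \<Rightarrow> 'b set set) \<Rightarrow> int poly" where
  "local_h V \<Omega> = (\<Sum>F\<in>Pow V. smult ((-1) ^ (card V - card F)) (h_poly (\<Omega> F) (card F)))"

text \<open>Barycentric subdivision: vertices are nonempty faces, faces are chains;
  its restriction to F consists of chains of nonempty subsets of F.\<close>
definition barycentric_sd :: "'a set \<Rightarrow> 'a set set set" where
  "barycentric_sd F = {C. C \<subseteq> Pow F - {{}} \<and> (\<forall>A\<in>C. \<forall>B\<in>C. A \<subseteq> B \<or> B \<subseteq> A)}"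

end

theory Submission
  imports Defs
begin

definition Top :: "nat \<Rightarrow> int poly \<Rightarrow> int poly" where
  "Top k p = p * [:1, int k:] + [:0,1,-1:] * pderiv p"

lemma pderiv_sum': "pderiv (sum f A) = (\<Sum>x\<in>A. pderiv (f x))"
  by (induction A rule: infinite_finite_induct) (auto simp: pderiv_add)

lemma Top_add: "Top k (p + q) = Top k p + Top k q"
  unfolding Top_def pderiv_add by (simp only: distrib_left distrib_right add_ac)

lemma Top_0: "Top k 0 = 0" by (simp add: Top_def)

lemma Top_sum: "Top k (sum f A) = (\<Sum>x\<in>A. Top k (f x))"
  by (induction A rule: infinite_finite_induct) (auto simp: Top_add Top_0)

lemma Top_smult: "Top k (smult c p) = smult c (Top k p)"
  unfolding Top_def pderiv_smult by (simp only: mult_smult_left mult_smult_right smult_add_right)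

lemma monom_times_lin: "monom (1::int) e * [:a, b:] = monom a e + monom b (Suc e)"
proof -
  have "[:a, b:] = monom a 0 + monom b 1" by (simp add: monom_0 monom_Suc)
  then show ?thesis by (simp add: algebra_simps mult_monom)
qed

lemma Top_monom: "e \<le> k \<Longrightarrow>
  Top k (monom 1 e) = monom (int e + 1) e + monom (int k - int e) (Suc e)"
proof -
  have h1: "monom 1 e * [:1, int k:] = monom 1 e + monom (int k) (Suc e)" by (rule monom_times_lin)
  have h2: "[:0,1,-1:] * pderiv (monom 1 e) = monom (int e) e + monom (- int e) (Suc e)"
  proof (cases e)
    case 0 then show ?thesis by simp
  next
    case (Suc f)
    have "[:0,1,-1:] = monom (1::int) 1 + monom (-1) 2"
      by (simp add: monom_Suc monom_0 numeral_2_eq_2)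
    then show ?thesis
      using Suc by (simp add: pderiv_monom algebra_simps mult_monom)
  qed
  have h3: "monom (int e + 1) e = monom (int e) e + monom 1 e" by (simp add: add_monom)
  have h4: "monom (int k - int e) (Suc e) = monom (int k) (Suc e) + monom (- int e) (Suc e)" by (simp add: add_monom)
  show ?thesis unfolding Top_def h1 h2 h3 h4 by (simp only: add_ac)
qed

definition excS :: "nat set \<Rightarrow> (nat \<Rightarrow> nat) \<Rightarrow> nat" where
  "excS F p = card {i\<in>F. p i > i}"

definition Aset :: "nat set \<Rightarrow> int poly" where
  "Aset F = (\<Sum>p\<in>{p. p permutes F}. monom 1 (excS F p))"

lemma excS_K1:
  assumes q: "q permutes F" and fin: "finite F" and x: "x \<notin> F" "\<forall>y\<in>F. y < x" and j: "j \<in> F"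
  shows "excS (insert x F) (Transposition.transpose x (q j) \<circ> q) = (if q j > j then excS F q else Suc (excS F q))"
proof -
  let ?r = "Transposition.transpose x (q j) \<circ> q"
  have qF: "\<And>i. i \<in> F \<Longrightarrow> q i \<in> F" using q by (simp add: permutes_in_image)
  have qx: "q x = x" using q x by (simp add: permutes_not_in)
  have inj: "\<And>i. i \<in> F \<Longrightarrow> q i = q j \<longleftrightarrow> i = j" using q j by (metis permutes_inj_on inj_on_eq_iff)
  have rx: "?r x = q j" using qx by simp
  have ri: "\<And>i. i \<in> F \<Longrightarrow> ?r i = (if i = j then x else q i)"
    using qF inj x by (auto simp: transpose_def)
  have "{i \<in> insert x F. ?r i > i} = insert j {i\<in>F. q i > i}"
  proof -
    have "\<not> ?r x > x" using rx qF[OF j] x by auto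
    moreover have "\<And>i. i \<in> F \<Longrightarrow> (?r i > i) = (i = j \<or> q i > i)"
      using ri x by auto
    ultimately show ?thesis using j by auto
  qed
  then show ?thesis unfolding excS_def using fin j by (auto simp: card_insert_if)
qed

lemma excS_K2:
  assumes q: "q permutes F" and x: "x \<notin> F"
  shows "excS (insert x F) q = excS F q"
proof -
  have "q x = x" using q x by (simp add: permutes_not_in)
  then have "{i \<in> insert x F. q i > i} = {i\<in>F. q i > i}" by auto
  then show ?thesis by (simp add: excS_def)
qed

lemma excS_le: "finite F \<Longrightarrow> excS F q \<le> card F"
  unfolding excS_def by (rule card_mono) auto

lemma A_insert:
  assumes fin: "finite F" and x: "x \<notin> F" "\<forall>y\<in>F. y < x"
  shows "Aset (insert x F) = Top (card F) (Aset F)"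
proof -
  have "Aset (insert x F) = (\<Sum>b\<in>insert x F. \<Sum>q\<in>{p. p permutes F}. monom 1 (excS (insert x F) (Transposition.transpose x b \<circ> q)))"
    unfolding Aset_def by (rule sum_over_permutations_insert[OF fin x(1)])
  also have "\<dots> = (\<Sum>q\<in>{p. p permutes F}. \<Sum>b\<in>insert x F. monom 1 (excS (insert x F) (Transposition.transpose x b \<circ> q)))"
    by (rule sum.swap)
  also have "\<dots> = (\<Sum>q\<in>{p. p permutes F}. Top (card F) (monom 1 (excS F q)))"
  proof (rule sum.cong[OF refl])
    fix q assume "q \<in> {p. p permutes F}"
    then have q: "q permutes F" by simp
    define e where "e = excS F q"
    have "(\<Sum>b\<in>insert x F. monom (1::int) (excS (insert x F) (Transposition.transpose x b \<circ> q)))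
       = monom 1 e + (\<Sum>b\<in>F. monom 1 (excS (insert x F) (Transposition.transpose x b \<circ> q)))"
      using fin x q by (simp add: excS_K2 e_def)
    also have "(\<Sum>b\<in>F. monom (1::int) (excS (insert x F) (Transposition.transpose x b \<circ> q)))
        = (\<Sum>j\<in>F. monom 1 (excS (insert x F) (Transposition.transpose x (q j) \<circ> q)))"
    proof -
      have "bij_betw q F F" using q by (rule permutes_imp_bij)
      then show ?thesis by (rule sum.reindex_bij_betw[symmetric])
    qed
    also have "\<dots> = (\<Sum>j\<in>F. if q j > j then monom 1 e else monom 1 (Suc e))"
      using excS_K1[OF q fin x] by (auto simp: e_def intro!: sum.cong)
    also have "\<dots> = of_nat (card (F \<inter> {j. q j > j})) * monom 1 e + of_nat (card (F \<inter> - {j. q j > j})) * monom 1 (Suc e)"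
      using fin by (simp add: sum.If_cases)
    also have "card (F \<inter> {j. q j > j}) = e" unfolding e_def excS_def by (metis Collect_conj_eq Collect_mem_eq)
    also have "card (F \<inter> - {j. q j > j}) = card F - e"
    proof -
      have "F \<inter> - {j. q j > j} = F - (F \<inter> {j. q j > j})" by auto
      then show ?thesis using fin \<open>card (F \<inter> {j. q j > j}) = e\<close> by (simp add: card_Diff_subset)
    qed
    finally have "(\<Sum>b\<in>insert x F. monom (1::int) (excS (insert x F) (Transposition.transpose x b \<circ> q)))
      = monom 1 e + of_nat e * monom 1 e + of_nat (card F - e) * monom 1 (Suc e)" by (simp only: add.assoc)
    also have "\<dots> = Top (card F) (monom 1 e)"
    proof -
      have m: "\<And>c d. (of_nat c :: int poly) * monom 1 d = monom (of_nat c) d" by (simp add: of_nat_monom mult_monom)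
      show ?thesis using excS_le[OF fin, of q] unfolding m
        by (simp add: Top_monom e_def of_nat_diff add_monom)
    qed
    finally show "(\<Sum>b\<in>insert x F. monom 1 (excS (insert x F) (Transposition.transpose x b \<circ> q))) = Top (card F) (monom 1 (excS F q))"
      by (simp add: e_def)
  qed
  also have "\<dots> = Top (card F) (Aset F)" by (simp add: Aset_def Top_sum)
  finally show ?thesis .
qed

definition bb :: "nat \<Rightarrow> nat \<Rightarrow> int poly" where
  "bb d i = monom 1 i * [:1, -1:] ^ (d - i)"

definition Hset :: "'a set \<Rightarrow> int poly" where
  "Hset F = h_poly (barycentric_sd F) (card F)"

lemma chain_card_le:
  assumes F: "finite F" and C: "C \<in> barycentric_sd F"
  shows "card C \<le> card F"
proof -
  have sub: "C \<subseteq> Pow F - {{}}" and ch: "\<forall>A\<in>C. \<forall>B\<in>C. A \<subseteq> B \<or> B \<subseteq> A"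
    using C by (auto simp: barycentric_sd_def)
  have inj: "inj_on card C"
  proof (rule inj_onI)
    fix A B assume "A \<in> C" "B \<in> C" "card A = card B"
    moreover have "finite A" "finite B" using \<open>A \<in> C\<close> \<open>B \<in> C\<close> sub F by (auto intro: finite_subset)
    ultimately show "A = B" using ch by (metis card_subset_eq)
  qed
  have "card ` C \<subseteq> {1..card F}"
  proof
    fix k assume "k \<in> card ` C"
    then obtain A where "A \<in> C" "k = card A" by auto
    moreover have "A \<subseteq> F" "A \<noteq> {}" using \<open>A \<in> C\<close> sub by auto
    moreover have "finite A" using \<open>A \<subseteq> F\<close> F finite_subset by auto
    ultimately show "k \<in> {1..card F}" using F by (auto simp: card_mono Suc_le_eq card_gt_0_iff)
  qed
  then have "card (card ` C) \<le> card F" using card_mono[of "{1..card F}"] by fastforce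
  then show ?thesis using card_image[OF inj] by simp
qed

lemma finite_sd: "finite F \<Longrightarrow> finite (barycentric_sd F)"
  unfolding barycentric_sd_def by (rule finite_subset[of _ "Pow (Pow F)"]) auto

lemma smult_card: "smult (int (card S)) p = (\<Sum>x\<in>S. p)"
  by (simp add: of_nat_poly)

lemma Hset_sum:
  assumes F: "finite F"
  shows "Hset F = (\<Sum>C\<in>barycentric_sd F. bb (card F) (card C))"
proof -
  have "Hset F = (\<Sum>i\<in>{..card F}. \<Sum>C\<in>{C \<in> barycentric_sd F. card C = i}. bb (card F) (card C))"
    unfolding Hset_def h_poly_def smult_card bb_def
    by (intro sum.cong refl) auto
  also have "\<dots> = (\<Sum>C\<in>barycentric_sd F. bb (card F) (card C))"
    by (rule sum.group) (use F finite_sd chain_card_le in auto)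
  finally show ?thesis .
qed

definition lowp :: "'a \<Rightarrow> 'a set \<Rightarrow> 'a set set \<Rightarrow> 'a set set" where
  "lowp x B C = (\<lambda>A. if A \<subseteq> B then A else insert x A) ` C"
definition mkc :: "'a \<Rightarrow> 'a set \<Rightarrow> 'a set set \<Rightarrow> bool \<Rightarrow> 'a set set" where
  "mkc x B C f = (if f then insert (insert x B) (lowp x B C) else lowp x B C)"
definition rr :: "'a \<Rightarrow> 'a set set \<Rightarrow> 'a set set" where
  "rr x C = (\<lambda>A. A - {x}) ` C - {{}}"
definition decB :: "'a \<Rightarrow> 'a set set \<Rightarrow> 'a set" where
  "decB x C = \<Union>{A\<in>C. x \<notin> A}"

lemma chain_union_mem:
  assumes "finite S" "S \<noteq> {}" "\<forall>A\<in>S. \<forall>B\<in>S. A \<subseteq> B \<or> B \<subseteq> A"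
  shows "\<Union>S \<in> S"
  using assms
proof (induction S rule: finite_ne_induct)
  case (singleton x) then show ?case by simp
next
  case (insert a S)
  then have "\<Union>S \<in> S" by blast
  then have "a \<subseteq> \<Union>S \<or> \<Union>S \<subseteq> a" using insert.prems by blast
  then show ?case using \<open>\<Union>S \<in> S\<close> by (auto simp: sup.absorb1 sup.absorb2)
qed

lemma mkc_mem:
  "Y \<in> mkc x B C f \<longleftrightarrow> (Y \<in> C \<and> Y \<subseteq> B) \<or> (\<exists>A\<in>C. \<not> A \<subseteq> B \<and> Y = insert x A) \<or> (f \<and> Y = insert x B)"
  unfolding mkc_def lowp_def by (auto split: if_splits)

locale fib =
  fixes x :: 'a and F :: "'a set" and C :: "'a set set" and B :: "'a set"
  assumes xF: "x \<notin> F" and C: "C \<in> barycentric_sd F" and B: "B \<in> insert {} C"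
begin

lemma CF: "\<And>A. A \<in> C \<Longrightarrow> A \<subseteq> F \<and> A \<noteq> {}" using C by (auto simp: barycentric_sd_def)
lemma ch: "\<And>A A'. A \<in> C \<Longrightarrow> A' \<in> C \<Longrightarrow> A \<subseteq> A' \<or> A' \<subseteq> A" using C by (auto simp: barycentric_sd_def)
lemma BF: "B \<subseteq> F" using B CF by auto
lemma Bch: "\<And>A. A \<in> C \<Longrightarrow> A \<subseteq> B \<or> B \<subseteq> A" using B ch by auto
lemma xA: "\<And>A. A \<in> C \<Longrightarrow> x \<notin> A" using CF xF by auto
lemma xB: "x \<notin> B" using BF xF by auto

lemma mkc_in: "mkc x B C f \<in> barycentric_sd (insert x F)"
proof -
  have CF': "\<forall>A\<in>C. A \<subseteq> F \<and> A \<noteq> {}" using CF by blast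
  have sub: "mkc x B C f \<subseteq> Pow (insert x F) - {{}}"
  proof
    fix Y assume "Y \<in> mkc x B C f"
    then consider "Y \<in> C" | A where "A \<in> C" "Y = insert x A" | "Y = insert x B" by (auto simp: mkc_mem)
    then show "Y \<in> Pow (insert x F) - {{}}"
      by cases (use CF' BF in auto)
  qed
  have "Y \<subseteq> Z \<or> Z \<subseteq> Y" if Y: "Y \<in> mkc x B C f" and Z: "Z \<in> mkc x B C f" for Y Z
  proof -
    consider (a) "Y \<in> C" "Y \<subseteq> B" | (b) A where "A \<in> C" "\<not> A \<subseteq> B" "Y = insert x A" | (c) "Y = insert x B"
      using Y unfolding mkc_mem by blast
    then show ?thesis
    proof cases
      case a
      consider (a') "Z \<in> C" "Z \<subseteq> B" | (b') A where "A \<in> C" "\<not> A \<subseteq> B" "Z = insert x A" | (c') "Z = insert x B"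
        using Z unfolding mkc_mem by blast
      then show ?thesis
      proof cases
        case a' then show ?thesis using ch a by blast
      next
        case (b' A) then show ?thesis using Bch[of A] a by blast
      next
        case c' then show ?thesis using a by blast
      qed
    next
      case (b A)
      consider (a') "Z \<in> C" "Z \<subseteq> B" | (b') A' where "A' \<in> C" "\<not> A' \<subseteq> B" "Z = insert x A'" | (c') "Z = insert x B"
        using Z unfolding mkc_mem by blast
      then show ?thesis
      proof cases
        case a' then show ?thesis using Bch[of A] b by blast
      next
        case (b' A') then show ?thesis using ch[of A A'] b by blast
      next
        case c' then show ?thesis using Bch[of A] b by blast
      qed
    next
      case c
      consider (a') "Z \<in> C" "Z \<subseteq> B" | (b') A' where "A' \<in> C" "\<not> A' \<subseteq> B" "Z = insert x A'" | (c') "Z = insert x B"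
        using Z unfolding mkc_mem by blast
      then show ?thesis
      proof cases
        case a' then show ?thesis using c by blast
      next
        case (b' A') then show ?thesis using Bch[of A'] c by blast
      next
        case c' then show ?thesis using c by blast
      qed
    qed
  qed
  then show ?thesis using sub by (auto simp: barycentric_sd_def)
qed

lemma rr_mkc: "rr x (mkc x B C f) = C"
proof -
  have "(\<lambda>A. A - {x}) ` mkc x B C f = C \<union> (if f then {B} else {})"
  proof
    show "(\<lambda>A. A - {x}) ` mkc x B C f \<subseteq> C \<union> (if f then {B} else {})"
      using xA xB by (auto simp: mkc_mem)
    show "C \<union> (if f then {B} else {}) \<subseteq> (\<lambda>A. A - {x}) ` mkc x B C f"
    proof
      fix A assume "A \<in> C \<union> (if f then {B} else {})"
      then consider "A \<in> C" "A \<subseteq> B" | "A \<in> C" "\<not> A \<subseteq> B" | "f" "A = B" by (auto split: if_splits)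
      then show "A \<in> (\<lambda>A. A - {x}) ` mkc x B C f"
      proof cases
        case 1 then show ?thesis using xA[of A] by (intro image_eqI[of _ _ A]) (auto simp: mkc_mem)
      next
        case 2 then show ?thesis using xA[of A] by (intro image_eqI[of _ _ "insert x A"]) (auto simp: mkc_mem)
      next
        case 3 then show ?thesis using xB by (intro image_eqI[of _ _ "insert x B"]) (auto simp: mkc_mem)
      qed
    qed
  qed
  moreover have "{} \<notin> C" using CF by auto
  ultimately show ?thesis using B unfolding rr_def by auto
qed

lemma decB_mkc: "decB x (mkc x B C f) = B"
proof -
  have "{A \<in> mkc x B C f. x \<notin> A} = {A\<in>C. A \<subseteq> B}"
    by (auto simp: mkc_mem xA)
  moreover have "\<Union>{A\<in>C. A \<subseteq> B} = B" using B by auto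
  ultimately show ?thesis by (simp add: decB_def)
qed

lemma flag_mkc: "(insert x B \<in> mkc x B C f) = f"
proof -
  have "insert x B \<notin> lowp x B C"
  proof
    assume "insert x B \<in> lowp x B C"
    then obtain A where A: "A \<in> C" "insert x B = (if A \<subseteq> B then A else insert x A)"
      unfolding lowp_def by blast
    show False
    proof (cases "A \<subseteq> B")
      case True then show False using A xA by auto
    next
      case False
      then have "insert x B = insert x A" using A by simp
      then have "B = A" using xA[OF A(1)] xB by (metis insert_ident)
      then show False using False by simp
    qed
  qed
  then show ?thesis by (auto simp: mkc_def)
qed

lemma card_mkc: assumes "finite F" shows "card (mkc x B C f) = card C + (if f then 1 else 0)"
proof -
  have "C \<subseteq> Pow F" using CF by auto
  then have finC: "finite C" using assms finite_subset by (metis finite_Pow_iff)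
  have "inj_on (\<lambda>A. if A \<subseteq> B then A else insert x A) C"
  proof (rule inj_onI)
    fix A A' assume AA: "A \<in> C" "A' \<in> C" "(if A \<subseteq> B then A else insert x A) = (if A' \<subseteq> B then A' else insert x A')"
    show "A = A'"
    proof (cases "A \<subseteq> B"; cases "A' \<subseteq> B")
      assume "A \<subseteq> B" "A' \<subseteq> B" then show ?thesis using AA by simp
    next
      assume "A \<subseteq> B" "\<not> A' \<subseteq> B" then have "A = insert x A'" using AA by simp
      then show ?thesis using xA[OF AA(1)] by auto
    next
      assume "\<not> A \<subseteq> B" "A' \<subseteq> B" then have "A' = insert x A" using AA by simp
      then show ?thesis using xA[OF AA(2)] by auto
    next
      assume "\<not> A \<subseteq> B" "\<not> A' \<subseteq> B" then have "insert x A = insert x A'" using AA by simp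
      then show ?thesis using xA[OF AA(1)] xA[OF AA(2)] by (metis insert_ident)
    qed
  qed
  then have "card (lowp x B C) = card C" unfolding lowp_def by (rule card_image)
  moreover have "finite (lowp x B C)" using finC by (simp add: lowp_def)
  ultimately show ?thesis using flag_mkc[of False] by (auto simp: mkc_def)
qed

end

lemma surj_mkc:
  assumes fin: "finite F" and xF: "x \<notin> F" and C': "C' \<in> barycentric_sd (insert x F)"
  shows "rr x C' \<in> barycentric_sd F \<and> decB x C' \<in> insert {} (rr x C') \<and>
         C' = mkc x (decB x C') (rr x C') (insert x (decB x C') \<in> C')"
proof -
  define C where "C = rr x C'"
  define B where "B = decB x C'"
  define L where "L = {A\<in>C'. x \<notin> A}"
  have sub: "\<And>A. A \<in> C' \<Longrightarrow> A \<subseteq> insert x F \<and> A \<noteq> {}" using C' by (auto simp: barycentric_sd_def)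
  have ch: "\<And>A A'. A \<in> C' \<Longrightarrow> A' \<in> C' \<Longrightarrow> A \<subseteq> A' \<or> A' \<subseteq> A" using C' by (auto simp: barycentric_sd_def)
  have finC': "finite C'"
  proof -
    have "C' \<subseteq> Pow (insert x F)" using sub by auto
    then show ?thesis using fin by (meson finite_Pow_iff finite_insert finite_subset)
  qed
  have Cmem: "A \<in> C \<longleftrightarrow> A \<noteq> {} \<and> (\<exists>A'\<in>C'. A = A' - {x})" for A
    unfolding C_def rr_def by auto
  have C1: "C \<in> barycentric_sd F"
  proof -
    have sub': "\<forall>A\<in>C'. A \<subseteq> insert x F" using sub by blast
    have "C \<subseteq> Pow F - {{}}"
    proof
      fix A assume "A \<in> C"
      then obtain A' where "A' \<in> C'" "A = A' - {x}" "A \<noteq> {}" by (auto simp: Cmem)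
      then show "A \<in> Pow F - {{}}" using sub' by blast
    qed
    moreover have "\<forall>A\<in>C. \<forall>A'\<in>C. A \<subseteq> A' \<or> A' \<subseteq> A"
    proof (intro ballI)
      fix A A' assume "A \<in> C" "A' \<in> C"
      then obtain Y Y' where "Y \<in> C'" "Y' \<in> C'" "A = Y - {x}" "A' = Y' - {x}" by (auto simp: Cmem)
      then show "A \<subseteq> A' \<or> A' \<subseteq> A" using ch[of Y Y'] by blast
    qed
    ultimately show ?thesis by (simp add: barycentric_sd_def)
  qed
  have BU: "B = \<Union>L" by (simp add: B_def decB_def L_def)
  have BL: "B = {} \<or> B \<in> L"
  proof (cases "L = {}")
    case True then show ?thesis using BU by simp
  next
    case False
    have "\<Union>L \<in> L"
      by (rule chain_union_mem) (use False finC' ch in \<open>auto simp: L_def\<close>)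
    then show ?thesis using BU by simp
  qed
  have LB: "\<And>A. A \<in> L \<Longrightarrow> A \<subseteq> B" by (auto simp: B_def decB_def L_def)
  have xB: "x \<notin> B" by (auto simp: B_def decB_def)
  have C2: "B \<in> insert {} C"
  proof (cases "B = {}")
    case False
    then have "B \<in> C'" "x \<notin> B" using BL by (auto simp: L_def)
    then show ?thesis using False by (auto simp: Cmem)
  qed simp
  have BC': "B \<noteq> {} \<Longrightarrow> B \<in> C'" using BL by (auto simp: L_def)
  have C3: "C' = mkc x B C (insert x B \<in> C')"
  proof (rule set_eqI)
    fix Y
    show "Y \<in> C' \<longleftrightarrow> Y \<in> mkc x B C (insert x B \<in> C')"
    proof
      assume Y: "Y \<in> C'"
      show "Y \<in> mkc x B C (insert x B \<in> C')"
      proof (cases "x \<in> Y")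
        case False
        then have "Y \<in> L" using Y by (simp add: L_def)
        then have "Y \<subseteq> B" by (rule LB)
        moreover have "Y \<in> C" using Y False sub[OF Y] by (auto simp: Cmem intro!: bexI[of _ Y])
        ultimately show ?thesis by (simp add: mkc_mem)
      next
        case True
        define A where "A = Y - {x}"
        have YA: "Y = insert x A" using True by (auto simp: A_def)
        show ?thesis
        proof (cases "A \<subseteq> B")
          case True
          have "B \<subseteq> A"
          proof (cases "B = {}")
            case False
            then have "B \<in> C'" by (rule BC')
            then have "B \<subseteq> Y \<or> Y \<subseteq> B" using ch Y by blast
            then show ?thesis using xB YA by auto
          qed simp
          then have "Y = insert x B" using True YA by auto
          then show ?thesis using Y by (simp add: mkc_mem)
        next
          case False
          then have "A \<noteq> {}" by auto
          then have "A \<in> C" using Y by (auto simp: Cmem A_def)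
          then show ?thesis using False YA by (auto simp: mkc_mem)
        qed
      qed
    next
      assume "Y \<in> mkc x B C (insert x B \<in> C')"
      then consider "Y \<in> C" "Y \<subseteq> B" | A where "A \<in> C" "\<not> A \<subseteq> B" "Y = insert x A" | "insert x B \<in> C'" "Y = insert x B"
        unfolding mkc_mem by blast
      then show "Y \<in> C'"
      proof cases
        case 1
        then obtain A' where A': "A' \<in> C'" "Y = A' - {x}" "Y \<noteq> {}" by (auto simp: Cmem)
        show ?thesis
        proof (cases "x \<in> A'")
          case False then show ?thesis using A' by auto
        next
          case True
          have "B \<noteq> {}" using 1 A' by auto
          then have "B \<in> C'" by (rule BC')
          then have "B \<subseteq> A' \<or> A' \<subseteq> B" using ch A' by blast
          then have "B \<subseteq> Y" using True xB A' by auto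
          then have "Y = B" using 1 by auto
          then show ?thesis using \<open>B \<in> C'\<close> by simp
        qed
      next
        case (2 A)
        then obtain A' where A': "A' \<in> C'" "A = A' - {x}" by (auto simp: Cmem)
        show ?thesis
        proof (cases "x \<in> A'")
          case False
          then have "A' \<in> L" using A' by (simp add: L_def)
          then have "A' \<subseteq> B" by (rule LB)
          then show ?thesis using 2 A' False by auto
        next
          case True
          then have "A' = Y" using 2 A' by auto
          then show ?thesis using A' by simp
        qed
      next
        case 3 then show ?thesis by simp
      qed
    qed
  qed
  show ?thesis using C1 C2 C3 by (simp add: C_def B_def)
qed

lemma smult_of_nat_mult: "smult (of_nat m) p = (of_nat m :: int poly) * p"
  by (simp add: of_nat_poly)

lemma Top_bb:
  assumes "i \<le> n"
  shows "Top n (bb n i) = smult (int i + 1) (bb n i)"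
proof -
  define X where "X = (monom 1 1 :: int poly)"
  define q where "q = ([:1,-1:] :: int poly)"
  define m where "m = n - i"
  have nm: "n = m + i" using assms by (simp add: m_def)
  have qX: "q = 1 - X" by (simp add: X_def q_def monom_Suc monom_0 one_pCons)
  have w: "[:0,1,-1:] = X * q" by (simp add: X_def q_def monom_Suc monom_0)
  have w': "pCons 0 q = X * q" by (simp add: X_def monom_Suc monom_0)
  have l: "[:1, int n:] = 1 + of_nat n * X" by (simp add: X_def monom_Suc monom_0 of_nat_poly one_pCons)
  have dq: "pderiv (q^m) = - (of_nat m * q^(m-1))"
    by (simp add: pderiv_power q_def pderiv_pCons smult_of_nat_mult)
  have dX: "pderiv (monom 1 i) = (of_nat i :: int poly) * monom 1 (i-1)"
    by (simp add: pderiv_monom of_nat_monom mult_monom)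
  have a: "q * (of_nat m * q^(m-1)) = of_nat m * q^m" by (cases m) (simp_all add: algebra_simps)
  have b: "X * (of_nat i * monom 1 (i-1)) = (of_nat i :: int poly) * monom 1 i"
    by (cases i) (simp_all add: X_def mult_monom algebra_simps)
  have "Top n (bb n i) = monom 1 i * q^m * (1 + of_nat n * X) + X * q * (monom 1 i * (- (of_nat m * q^(m-1))) + q^m * (of_nat i * monom 1 (i-1)))"
    unfolding Top_def bb_def l w pderiv_mult dq dX m_def[symmetric] q_def[symmetric] by (simp add: w')
  also have "\<dots> = monom 1 i * q^m * (1 + of_nat n * X) - X * monom 1 i * (q * (of_nat m * q^(m-1))) + q * q^m * (X * (of_nat i * monom 1 (i-1)))"
    by (simp add: algebra_simps)
  also have "\<dots> = monom 1 i * q^m * (1 + of_nat n * X) - X * monom 1 i * (of_nat m * q^m) + q * q^m * (of_nat i * monom 1 i)"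
    unfolding a b ..
  also have "\<dots> = monom 1 i * q^m * (1 + of_nat n * X - of_nat m * X + of_nat i * q)"
    by (simp add: algebra_simps)
  also have "1 + of_nat n * X - of_nat m * X + of_nat i * q = 1 + (of_nat i :: int poly)"
    unfolding nm qX of_nat_add by (simp add: algebra_simps)
  also have "monom 1 i * q^m * (1 + of_nat i) = smult (int i + 1) (monom 1 i * q^m)"
  proof -
    have "(1 + of_nat i :: int poly) = [:int i + 1:]" by (simp add: of_nat_poly one_pCons)
    then show ?thesis by simp
  qed
  finally show ?thesis by (simp add: bb_def m_def q_def)
qed

lemma bb_split: "i \<le> n \<Longrightarrow> bb (Suc n) i + bb (Suc n) (Suc i) = bb n i"
proof -
  assume "i \<le> n"
  then have e: "Suc n - i = Suc (n - i)" "Suc n - Suc i = n - i" by simp_all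
  define X where "X = (monom 1 1 :: int poly)"
  define q where "q = ([:1,-1:] :: int poly)"
  have m: "monom (1::int) (Suc i) = monom 1 i * X" by (simp add: mult_monom X_def)
  have qX: "q + X = 1" by (simp add: X_def q_def monom_Suc monom_0 one_pCons)
  have "monom 1 i * q ^ Suc (n - i) + monom 1 i * X * q ^ (n - i) = monom 1 i * q ^ (n - i) * (q + X)"
    by (simp add: algebra_simps)
  then show ?thesis unfolding bb_def e m q_def[symmetric] qX by simp
qed

lemma H_insert:
  assumes fin: "finite F" and xF: "x \<notin> F"
  shows "Hset (insert x F) = Top (card F) (Hset F)"
proof -
  define n where "n = card F"
  define \<Phi> where "\<Phi> = (\<lambda>(C :: 'a set set, B :: 'a set, f :: bool). mkc x B C f)"
  define S where "S = (SIGMA C:barycentric_sd F. insert {} C \<times> (UNIV::bool set))"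
  have fibI: "fib x F C B" if "C \<in> barycentric_sd F" "B \<in> insert {} C" for C B
    using that xF by (simp add: fib_def)
  have img: "barycentric_sd (insert x F) = \<Phi> ` S"
  proof
    show "\<Phi> ` S \<subseteq> barycentric_sd (insert x F)"
      using fib.mkc_in[OF fibI] by (auto simp: \<Phi>_def S_def)
    show "barycentric_sd (insert x F) \<subseteq> \<Phi> ` S"
    proof
      fix C' assume C': "C' \<in> barycentric_sd (insert x F)"
      from surj_mkc[OF fin xF C'] show "C' \<in> \<Phi> ` S"
        unfolding \<Phi>_def S_def
        by (intro image_eqI[of _ _ "(rr x C', decB x C', insert x (decB x C') \<in> C')"]) auto
    qed
  qed
  have inj: "inj_on \<Phi> S"
  proof (rule inj_onI)
    fix p1 p2 assume p: "p1 \<in> S" "p2 \<in> S" "\<Phi> p1 = \<Phi> p2"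
    obtain C1 B1 f1 where p1: "p1 = (C1, B1, f1)" by (cases p1) auto
    obtain C2 B2 f2 where p2: "p2 = (C2, B2, f2)" by (cases p2) auto
    have F1: "fib x F C1 B1" using p(1) p1 by (intro fibI) (auto simp: S_def)
    have F2: "fib x F C2 B2" using p(2) p2 by (intro fibI) (auto simp: S_def)
    have eq: "mkc x B1 C1 f1 = mkc x B2 C2 f2" using p(3) p1 p2 by (simp add: \<Phi>_def)
    have "C1 = C2" using fib.rr_mkc[OF F1, of f1] fib.rr_mkc[OF F2, of f2] eq by simp
    moreover have "B1 = B2" using fib.decB_mkc[OF F1, of f1] fib.decB_mkc[OF F2, of f2] eq by simp
    moreover have "f1 = f2" using fib.flag_mkc[OF F1, of f1] fib.flag_mkc[OF F2, of f2] eq \<open>B1 = B2\<close> by simp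
    ultimately show "p1 = p2" using p1 p2 by simp
  qed
  have finsd: "finite (barycentric_sd F)" using fin by (rule finite_sd)
  have finC: "\<And>C. C \<in> barycentric_sd F \<Longrightarrow> finite C"
    using finsd fin by (auto simp: barycentric_sd_def intro: finite_subset[of _ "Pow F"])
  have ne: "\<And>C. C \<in> barycentric_sd F \<Longrightarrow> {} \<notin> C" by (auto simp: barycentric_sd_def)
  have "Hset (insert x F) = (\<Sum>C'\<in>barycentric_sd (insert x F). bb (Suc n) (card C'))"
    using fin xF by (simp add: Hset_sum n_def)
  also have "\<dots> = (\<Sum>p\<in>S. bb (Suc n) (card (\<Phi> p)))"
    unfolding img by (rule sum.reindex[OF inj, unfolded comp_def])
  also have "\<dots> = (\<Sum>(C,q)\<in>S. bb (Suc n) (card (\<Phi> (C, q))))" by (simp add: case_prod_unfold)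
  also have "\<dots> = (\<Sum>C\<in>barycentric_sd F. \<Sum>q\<in>insert {} C \<times> (UNIV::bool set). bb (Suc n) (card (\<Phi> (C, q))))"
    unfolding S_def by (rule sum.Sigma[symmetric]) (use finsd finC in auto)
  also have "\<dots> = (\<Sum>C\<in>barycentric_sd F. smult (int (card C) + 1) (bb n (card C)))"
  proof (rule sum.cong[OF refl])
    fix C assume C: "C \<in> barycentric_sd F"
    have "(\<Sum>q\<in>insert {} C \<times> (UNIV::bool set). bb (Suc n) (card (\<Phi> (C, q))))
        = (\<Sum>B\<in>insert {} C. \<Sum>f\<in>(UNIV::bool set). bb (Suc n) (card (mkc x B C f)))"
      by (simp add: sum.cartesian_product \<Phi>_def case_prod_unfold)
    also have "\<dots> = (\<Sum>B\<in>insert {} C. bb (Suc n) (card C) + bb (Suc n) (Suc (card C)))"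
    proof (rule sum.cong[OF refl])
      fix B assume "B \<in> insert {} C"
      then have "fib x F C B" using C fibI by blast
      then show "(\<Sum>f\<in>(UNIV::bool set). bb (Suc n) (card (mkc x B C f))) = bb (Suc n) (card C) + bb (Suc n) (Suc (card C))"
        using fib.card_mkc[OF _ fin] by (simp add: UNIV_bool)
    qed
    also have "\<dots> = smult (int (card C) + 1) (bb n (card C))"
    proof -
      have "card C \<le> n" using chain_card_le[OF fin C] by (simp add: n_def)
      then have "bb (Suc n) (card C) + bb (Suc n) (Suc (card C)) = bb n (card C)" by (rule bb_split)
      moreover have "card (insert {} C) = card C + 1" using finC[OF C] ne[OF C] by simp
      ultimately show ?thesis by (simp add: of_nat_poly add.commute)
    qed
    finally show "(\<Sum>q\<in>insert {} C \<times> (UNIV::bool set). bb (Suc n) (card (\<Phi> (C, q)))) = smult (int (card C) + 1) (bb n (card C))" .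
  qed
  also have "\<dots> = (\<Sum>C\<in>barycentric_sd F. Top n (bb n (card C)))"
    by (rule sum.cong[OF refl], rule Top_bb[symmetric]) (use chain_card_le[OF fin] n_def in auto)
  also have "\<dots> = Top n (Hset F)"
    using fin by (simp add: Hset_sum Top_sum n_def)
  finally show ?thesis by (simp add: n_def)
qed

lemma Aset_empty: "Aset {} = 1"
proof -
  have "{p. p permutes ({}::nat set)} = {id}" by auto
  then show ?thesis by (simp add: Aset_def excS_def)
qed

lemma sd_empty: "barycentric_sd {} = {{}}"
  unfolding barycentric_sd_def by blast

lemma Hset_empty: "Hset {} = 1"
  by (simp add: Hset_sum sd_empty bb_def)

lemma A_eq_H: "finite F \<Longrightarrow> Aset F = Hset (F :: nat set)"
proof (induction "card F" arbitrary: F rule: less_induct)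
  case less
  show ?case
  proof (cases "F = {}")
    case True then show ?thesis by (simp add: Aset_empty Hset_empty)
  next
    case False
    define x where "x = Max F"
    define F' where "F' = F - {x}"
    have xF: "x \<in> F" using False less.prems by (simp add: x_def)
    have F: "F = insert x F'" using xF by (auto simp: F'_def)
    have fin: "finite F'" using less.prems by (simp add: F'_def)
    have x': "x \<notin> F'" by (simp add: F'_def)
    have lt: "\<forall>y\<in>F'. y < x" using less.prems by (auto simp: F'_def x_def le_neq_trans)
    have "card F' < card F" unfolding F'_def using less.prems xF by (rule card_Diff1_less)
    then have IH: "Aset F' = Hset F'" using less.hyps fin by blast
    show ?thesis unfolding F using A_insert[OF fin x' lt] H_insert[OF fin x'] IH by simp
  qed
qed

definition dpolyS :: "nat set \<Rightarrow> int poly" where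
  "dpolyS G = (\<Sum>p\<in>{p. p permutes G \<and> (\<forall>i\<in>G. p i \<noteq> i)}. monom 1 (excS G p))"

lemma A_supp:
  assumes fin: "finite F"
  shows "Aset F = sum dpolyS (Pow F)"
proof -
  define supp where "supp = (\<lambda>p::nat\<Rightarrow>nat. {i\<in>F. p i \<noteq> i})"
  have finP: "finite {p. p permutes F}" using fin by (rule finite_permutations)
  have "Aset F = (\<Sum>G\<in>Pow F. \<Sum>p\<in>{p \<in> {p. p permutes F}. supp p = G}. monom 1 (excS F p))"
    unfolding Aset_def by (rule sum.group[symmetric]) (use fin finP in \<open>auto simp: supp_def\<close>)
  also have "\<dots> = sum dpolyS (Pow F)"
  proof (rule sum.cong[OF refl])
    fix G assume G: "G \<in> Pow F"
    have eqset: "{p \<in> {p. p permutes F}. supp p = G} = {p. p permutes G \<and> (\<forall>i\<in>G. p i \<noteq> i)}"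
    proof (intro set_eqI iffI)
      fix p assume "p \<in> {p \<in> {p. p permutes F}. supp p = G}"
      then have p: "p permutes F" "supp p = G" by auto
      have "p permutes G"
        by (rule permutes_superset[OF p(1)]) (use p(2) in \<open>auto simp: supp_def\<close>)
      moreover have "\<forall>i\<in>G. p i \<noteq> i" using p(2) by (auto simp: supp_def)
      ultimately show "p \<in> {p. p permutes G \<and> (\<forall>i\<in>G. p i \<noteq> i)}" by simp
    next
      fix p assume "p \<in> {p. p permutes G \<and> (\<forall>i\<in>G. p i \<noteq> i)}"
      then have p: "p permutes G" "\<forall>i\<in>G. p i \<noteq> i" by auto
      have fx: "\<forall>i. i \<notin> G \<longrightarrow> p i = i" using permutes_not_in[OF p(1)] by blast
      have "p permutes F" using permutes_subset[OF p(1)] G by auto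
      moreover have "supp p = G" using p G fx by (auto simp: supp_def)
      ultimately show "p \<in> {p \<in> {p. p permutes F}. supp p = G}" by simp
    qed
    have ex: "excS F p = excS G p" if "p permutes G" for p
    proof -
      have fx: "\<forall>i. i \<notin> G \<longrightarrow> p i = i" using permutes_not_in[OF that] by blast
      have "{i\<in>F. p i > i} = {i\<in>G. p i > i}" using fx G by auto
      then show ?thesis by (simp add: excS_def)
    qed
    show "(\<Sum>p\<in>{p \<in> {p. p permutes F}. supp p = G}. monom 1 (excS F p)) = dpolyS G"
      unfolding eqset dpolyS_def by (rule sum.cong[OF refl]) (simp add: ex)
  qed
  finally show ?thesis .
qed

lemma neg_one_pow_poly: "(- 1 :: int poly) ^ k * p = smult ((- 1) ^ k) p"
proof -
  have "(- 1 :: int poly) ^ k = [:(- 1) ^ k:]" by (induction k) (simp_all add: one_pCons)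
  then show ?thesis by simp
qed

lemma local_h_derangement:
  "local_h {1..n} barycentric_sd = derangement_poly n"
proof -
  have "dpolyS {1..n} = (\<Sum>T\<in>Pow {1..n}. (-1) ^ (card {1..n} - card T) * Aset T)"
    by (rule inclusion_exclusion_mobius) (simp_all add: A_supp)
  also have "\<dots> = local_h {1..n} barycentric_sd"
    unfolding local_h_def
  proof (rule sum.cong[OF refl])
    fix T assume "T \<in> Pow {1..n::nat}"
    then have "finite T" by (meson PowD finite_atLeastAtMost finite_subset)
    then show "(-1) ^ (card {1..n} - card T) * Aset T = smult ((-1) ^ (card {1..n} - card T)) (h_poly (barycentric_sd T) (card T))"
      by (simp add: A_eq_H Hset_def neg_one_pow_poly)
  qed
  finally have "dpolyS {1..n} = local_h {1..n} barycentric_sd" .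
  moreover have "dpolyS {1..n} = derangement_poly n"
    unfolding dpolyS_def derangement_poly_def derangements_def exc_def excS_def ..
  ultimately show ?thesis by simp
qed

lemma perm_of_inj:
  assumes "finite S" "\<And>x. x \<in> S \<Longrightarrow> f x \<in> S" "inj_on f S" "\<And>x. x \<notin> S \<Longrightarrow> f x = x"
  shows "f permutes S"
proof (rule bij_imp_permutes)
  have "f ` S = S" using assms by (intro endo_inj_surj) auto
  then show "bij_betw f S S" using assms(3) by (simp add: bij_betw_def)
qed (use assms in auto)

definition shift :: "nat \<Rightarrow> nat \<Rightarrow> nat" where "shift v i = (if i < v then i else Suc i)"
definition unshift :: "nat \<Rightarrow> nat \<Rightarrow> nat" where "unshift v i = (if i < v then i else i - 1)"

lemma shift_inj[simp]: "shift v a = shift v b \<longleftrightarrow> a = b" by (auto simp: shift_def)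
lemma shift_ne[simp]: "shift v a \<noteq> v" by (auto simp: shift_def)
lemma unshift_shift[simp]: "unshift v (shift v a) = a" by (auto simp: shift_def unshift_def)
lemma shift_unshift: "a \<noteq> v \<Longrightarrow> shift v (unshift v a) = a" by (auto simp: shift_def unshift_def)
lemma shift_less[simp]: "shift v a < shift v b \<longleftrightarrow> a < b" by (auto simp: shift_def)
lemma shift_gt_v: "v < shift v a \<longleftrightarrow> v \<le> a" by (auto simp: shift_def)

definition Ede :: "nat \<Rightarrow> (nat \<Rightarrow> nat) set" where
  "Ede n = {t. t permutes {1..n} \<and> (\<forall>i\<in>{1..<n}. t i \<noteq> i)}"

definition ins :: "nat \<Rightarrow> nat \<Rightarrow> (nat \<Rightarrow> nat) \<Rightarrow> nat \<Rightarrow> nat" where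
  "ins n v t i = (if i = Suc n then v else if i = v then shift v (t n)
       else if i \<in> {1..n} then shift v (t (unshift v i)) else i)"

definition del :: "nat \<Rightarrow> nat \<Rightarrow> (nat \<Rightarrow> nat) \<Rightarrow> nat \<Rightarrow> nat" where
  "del n v s j = (if j = n then unshift v (s v) else if j \<in> {1..<n} then unshift v (s (shift v j)) else j)"

locale dv =
  fixes n v :: nat
  assumes v: "1 \<le> v" "v \<le> n"
begin

lemma unshift_range: "i \<in> {1..n} \<Longrightarrow> i \<noteq> v \<Longrightarrow> unshift v i \<in> {1..<n}"
  using v by (auto simp: unshift_def)

lemma shift_range: "j \<in> {1..<n} \<Longrightarrow> shift v j \<in> {1..n} \<and> shift v j \<noteq> v"
  using v by (auto simp: shift_def)

lemma shift_range': "j \<in> {1..n} \<Longrightarrow> shift v j \<in> {1..Suc n}"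
  using v by (auto simp: shift_def)

lemma unshift_range': "a \<in> {1..Suc n} \<Longrightarrow> a \<noteq> v \<Longrightarrow> unshift v a \<in> {1..n}"
  using v by (auto simp: unshift_def)

lemma ins_mem:
  assumes t: "t \<in> Ede n"
  shows "ins n v t \<in> {s \<in> derangements (Suc n). s (Suc n) = v}"
proof -
  have tp: "t permutes {1..n}" and tf: "\<forall>i\<in>{1..<n}. t i \<noteq> i" using t by (auto simp: Ede_def)
  have tin: "\<And>i. i \<in> {1..n} \<Longrightarrow> t i \<in> {1..n}" using permutes_in_image[OF tp] by blast
  have tinj: "\<And>i j. i \<in> {1..n} \<Longrightarrow> j \<in> {1..n} \<Longrightarrow> t i = t j \<longleftrightarrow> i = j"
    using tp by (metis permutes_inj_on inj_on_eq_iff)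
  have n1: "n \<in> {1..n}" using v by auto
  let ?s = "ins n v t"
  have into: "?s i \<in> {1..Suc n}" if iS: "i \<in> {1..Suc n}" for i
  proof -
    consider "i = Suc n" | "i = v" | "i \<in> {1..n}" "i \<noteq> v" using iS by fastforce
    then show ?thesis
    proof cases
      case 1 then show ?thesis using v by (simp add: ins_def)
    next
      case 2 then show ?thesis using v tin[OF n1] shift_range' by (simp add: ins_def)
    next
      case 3
      then have "unshift v i \<in> {1..n}" using unshift_range[of i] by auto
      then show ?thesis using 3 tin shift_range' by (simp add: ins_def)
    qed
  qed
  have vals: "?s (Suc n) = v" "?s v = shift v (t n)"
    "\<And>i. i \<in> {1..n} \<Longrightarrow> i \<noteq> v \<Longrightarrow> ?s i = shift v (t (unshift v i))"
    using v by (auto simp: ins_def)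
  have inj: "inj_on ?s {1..Suc n}"
  proof (rule inj_onI)
    fix i j assume i: "i \<in> {1..Suc n}" and j: "j \<in> {1..Suc n}" and eq: "?s i = ?s j"
    have cases_i: "i = Suc n \<or> i = v \<or> (i \<in> {1..n} \<and> i \<noteq> v)" using i by fastforce
    have cases_j: "j = Suc n \<or> j = v \<or> (j \<in> {1..n} \<and> j \<noteq> v)" using j by fastforce
    have un: "\<And>i. i \<in> {1..n} \<Longrightarrow> i \<noteq> v \<Longrightarrow> unshift v i \<noteq> n \<and> unshift v i \<in> {1..n}"
      using unshift_range by fastforce
    show "i = j"
      using cases_i cases_j eq vals un tinj n1
      by (smt (verit) shift_inj shift_ne shift_unshift)
  qed
  have outside: "\<And>i. i \<notin> {1..Suc n} \<Longrightarrow> ?s i = i" using v by (auto simp: ins_def)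
  have perm: "?s permutes {1..Suc n}"
    by (rule perm_of_inj) (use into inj outside in auto)
  have nofix: "\<forall>i\<in>{1..Suc n}. ?s i \<noteq> i"
  proof
    fix i assume i: "i \<in> {1..Suc n}"
    have "i = Suc n \<or> i = v \<or> (i \<in> {1..n} \<and> i \<noteq> v)" using i by fastforce
    then show "?s i \<noteq> i"
    proof (elim disjE conjE)
      assume "i = Suc n" then show ?thesis using vals v by simp
    next
      assume "i = v" then show ?thesis using vals by simp
    next
      assume a: "i \<in> {1..n}" "i \<noteq> v"
      then have u: "unshift v i \<in> {1..<n}" using unshift_range by simp
      then have "t (unshift v i) \<noteq> unshift v i" using tf by blast
      then have "shift v (t (unshift v i)) \<noteq> shift v (unshift v i)" by simp
      then show ?thesis using vals(3)[OF a] shift_unshift[OF a(2)] by simp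
    qed
  qed
  show ?thesis using perm nofix vals by (simp add: derangements_def)
qed

lemma del_out: "j \<noteq> n \<Longrightarrow> j \<notin> {1..<n} \<Longrightarrow> del n v s j = j"
  by (auto simp: del_def)

lemma ins_out: "i \<noteq> Suc n \<Longrightarrow> i \<noteq> v \<Longrightarrow> i \<notin> {1..n} \<Longrightarrow> ins n v t i = i"
  by (auto simp: ins_def)

lemma ins_v: "ins n v t v = shift v (t n)" using v by (simp add: ins_def)
lemma ins_Sucn: "ins n v t (Suc n) = v" by (simp add: ins_def)

lemma unshift_inj: "a \<noteq> v \<Longrightarrow> b \<noteq> v \<Longrightarrow> unshift v a = unshift v b \<longleftrightarrow> a = b"
  by (metis shift_unshift)

lemma del_mem:
  assumes s: "s \<in> {s \<in> derangements (Suc n). s (Suc n) = v}"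
  shows "del n v s \<in> Ede n"
proof -
  have sp: "s permutes {1..Suc n}" and sf: "\<forall>i\<in>{1..Suc n}. s i \<noteq> i" and sv: "s (Suc n) = v"
    using s by (auto simp: derangements_def)
  have sin: "\<And>i. i \<in> {1..Suc n} \<Longrightarrow> s i \<in> {1..Suc n}" using permutes_in_image[OF sp] by blast
  have sinj: "\<And>i j. i \<in> {1..Suc n} \<Longrightarrow> j \<in> {1..Suc n} \<Longrightarrow> s i = s j \<longleftrightarrow> i = j"
    using sp by (metis permutes_inj_on inj_on_eq_iff)
  have sv': "\<And>a. a \<in> {1..Suc n} \<Longrightarrow> s a = v \<longleftrightarrow> a = Suc n"
    using sinj[of _ "Suc n"] sv by auto
  have vr: "v \<in> {1..Suc n}" using v by auto
  let ?t = "del n v s"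
  have d1: "?t n = unshift v (s v)" by (simp add: del_def)
  have d2: "\<And>j. j \<in> {1..<n} \<Longrightarrow> ?t j = unshift v (s (shift v j))" by (auto simp: del_def)
  have d3: "\<And>j. j \<notin> {1..n} \<Longrightarrow> ?t j = j" using v by (auto simp: del_def)
  have svv: "s v \<noteq> v" using sf vr by blast
  have svr: "s v \<in> {1..Suc n}" using sin vr by blast
  have shr: "\<And>j. j \<in> {1..<n} \<Longrightarrow> shift v j \<in> {1..Suc n} \<and> shift v j \<noteq> Suc n \<and> shift v j \<noteq> v"
    using shift_range by fastforce
  have sshv: "\<And>j. j \<in> {1..<n} \<Longrightarrow> s (shift v j) \<noteq> v \<and> s (shift v j) \<in> {1..Suc n}"
    using shr sv' sin by blast
  have into: "?t j \<in> {1..n}" if j: "j \<in> {1..n}" for j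
  proof (cases "j = n")
    case True then show ?thesis using d1 unshift_range' svr svv by simp
  next
    case False
    then have "j \<in> {1..<n}" using j by auto
    then show ?thesis using d2 unshift_range' sshv by simp
  qed
  have inj: "inj_on ?t {1..n}"
  proof (rule inj_onI)
    fix i j assume i: "i \<in> {1..n}" and j: "j \<in> {1..n}" and eq: "?t i = ?t j"
    have ci: "i = n \<or> i \<in> {1..<n}" using i by auto
    have cj: "j = n \<or> j \<in> {1..<n}" using j by auto
    show "i = j"
      using ci cj eq d1 d2 unshift_inj sshv svv svr shr sinj vr
      by (smt (verit) shift_inj)
  qed
  have perm: "?t permutes {1..n}"
    by (rule perm_of_inj) (use into inj d3 in auto)
  have nofix: "\<forall>j\<in>{1..<n}. ?t j \<noteq> j"
  proof
    fix j assume j: "j \<in> {1..<n}"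
    show "?t j \<noteq> j"
    proof
      assume "?t j = j"
      then have "shift v (unshift v (s (shift v j))) = shift v j" using d2[OF j] by simp
      then have "s (shift v j) = shift v j" using sshv[OF j] shift_unshift by simp
      then show False using sf shr[OF j] by blast
    qed
  qed
  show ?thesis using perm nofix by (simp add: Ede_def)
qed

lemma del_ins:
  assumes t: "t \<in> Ede n"
  shows "del n v (ins n v t) = t"
proof
  fix j
  have tp: "t permutes {1..n}" using t by (simp add: Ede_def)
  show "del n v (ins n v t) j = t j"
  proof (cases "j = n")
    case True then show ?thesis using v by (simp add: del_def ins_def)
  next
    case False
    show ?thesis
    proof (cases "j \<in> {1..<n}")
      case True
      then have "shift v j \<in> {1..n}" "shift v j \<noteq> v" using shift_range by auto
      then have "ins n v t (shift v j) = shift v (t j)" by (auto simp: ins_def)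
      then show ?thesis using True False by (simp add: del_def)
    next
      case F2: False
      then have "j \<notin> {1..n}" using False by auto
      then show ?thesis using del_out[OF False F2] permutes_not_in[OF tp] by simp
    qed
  qed
qed

lemma ins_del:
  assumes s: "s \<in> {s \<in> derangements (Suc n). s (Suc n) = v}"
  shows "ins n v (del n v s) = s"
proof
  fix i
  have sp: "s permutes {1..Suc n}" and sf: "\<forall>i\<in>{1..Suc n}. s i \<noteq> i" and sv: "s (Suc n) = v"
    using s by (auto simp: derangements_def)
  have sinj: "\<And>i j. i \<in> {1..Suc n} \<Longrightarrow> j \<in> {1..Suc n} \<Longrightarrow> s i = s j \<longleftrightarrow> i = j"
    using sp by (metis permutes_inj_on inj_on_eq_iff)
  have vr: "v \<in> {1..Suc n}" using v by auto
  have svv: "s v \<noteq> v" using sf vr by blast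
  show "ins n v (del n v s) i = s i"
  proof (cases "i = Suc n")
    case True then show ?thesis using sv by (simp add: ins_def)
  next
    case F1: False
    show ?thesis
    proof (cases "i = v")
      case True
      then show ?thesis using F1 svv shift_unshift by (simp add: ins_def del_def)
    next
      case F2: False
      show ?thesis
      proof (cases "i \<in> {1..n}")
        case True
        then have u: "unshift v i \<in> {1..<n}" using unshift_range F2 by simp
        then have un: "unshift v i \<noteq> n" by simp
        have "s i \<noteq> v" using sinj[of i "Suc n"] sv True F1 by auto
        then show ?thesis using True F1 F2 u un shift_unshift[OF F2] shift_unshift[of "s i"]
          by (simp add: ins_def del_def)
      next
        case False
        then have "i \<notin> {1..Suc n}" using F1 by auto
        then show ?thesis using ins_out[OF F1 F2 False] permutes_not_in[OF sp] by simp
      qed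
    qed
  qed
qed

lemma exc_ins:
  assumes t: "t \<in> Ede n"
  shows "exc (Suc n) (ins n v t) = exc n t + (if v \<le> t n then 1 else 0)"
proof -
  have tp: "t permutes {1..n}" using t by (simp add: Ede_def)
  have tin: "\<And>i. i \<in> {1..n} \<Longrightarrow> t i \<in> {1..n}" using permutes_in_image[OF tp] by blast
  define A where "A = {j\<in>{1..<n}. t j > j}"
  have "{i\<in>{1..n}. t i > i} = A"
  proof -
    have "\<not> t n > n" using tin[of n] v by auto
    then show ?thesis by (auto simp: A_def nat_less_le)
  qed
  then have e1: "exc n t = card A" by (simp add: exc_def)
  have S: "{i\<in>{1..Suc n}. ins n v t i > i} = shift v ` A \<union> (if v \<le> t n then {v} else {})"
  proof (intro set_eqI iffI)
    fix i assume i: "i \<in> {i\<in>{1..Suc n}. ins n v t i > i}"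
    then have ir: "i \<in> {1..Suc n}" and gt: "ins n v t i > i" by auto
    have "i = Suc n \<or> i = v \<or> (i \<in> {1..n} \<and> i \<noteq> v)" using ir by fastforce
    then show "i \<in> shift v ` A \<union> (if v \<le> t n then {v} else {})"
    proof (elim disjE conjE)
      assume "i = Suc n" then show ?thesis using gt v by (simp add: ins_def)
    next
      assume "i = v" then show ?thesis using gt by (simp add: ins_v shift_gt_v)
    next
      assume a: "i \<in> {1..n}" "i \<noteq> v"
      then have u: "unshift v i \<in> {1..<n}" using unshift_range by simp
      have "shift v (t (unshift v i)) > shift v (unshift v i)"
        using gt a shift_unshift[OF a(2)] by (auto simp: ins_def)
      then have "unshift v i \<in> A" using u by (simp add: A_def)
      then show ?thesis using shift_unshift[OF a(2)] by (metis UnI1 image_eqI)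
    qed
  next
    fix i assume i: "i \<in> shift v ` A \<union> (if v \<le> t n then {v} else {})"
    show "i \<in> {i\<in>{1..Suc n}. ins n v t i > i}"
    proof (cases "i \<in> shift v ` A")
      case True
      then obtain j where j: "j \<in> A" "i = shift v j" by auto
      then have jr: "j \<in> {1..<n}" and tj: "t j > j" by (auto simp: A_def)
      then have "i \<in> {1..n}" "i \<noteq> v" using shift_range j by auto
      moreover then have "ins n v t i = shift v (t j)" using j by (auto simp: ins_def)
      ultimately show ?thesis using tj j by auto
    next
      case False
      then have "i = v" "v \<le> t n" using i by (auto split: if_splits)
      then show ?thesis using v by (simp add: ins_v shift_gt_v)
    qed
  qed
  have "v \<notin> shift v ` A" using shift_ne by (metis imageE)
  moreover have "card (shift v ` A) = card A" by (rule card_image) (simp add: inj_on_def)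
  moreover have "finite A" by (simp add: A_def)
  ultimately show ?thesis unfolding e1 unfolding exc_def S by auto
qed

lemma bij_ins: "bij_betw (ins n v) (Ede n) {s \<in> derangements (Suc n). s (Suc n) = v}"
  by (rule bij_betw_byWitness[where f' = "del n v"]) (use del_ins ins_del ins_mem del_mem in auto)

end

definition Dp :: "nat \<Rightarrow> nat \<Rightarrow> int poly" where
  "Dp n u = (\<Sum>s\<in>{s \<in> derangements n. s n = u}. monom 1 (exc n s))"

lemma finite_der: "finite (derangements n)"
proof -
  have "derangements n \<subseteq> {p. p permutes {1..n}}" by (auto simp: derangements_def)
  then show ?thesis using finite_permutations[of "{1..n}"] finite_subset by auto
qed

lemma finite_Ede: "finite (Ede n)"
proof -
  have "Ede n \<subseteq> {p. p permutes {1..n}}" by (auto simp: Ede_def)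
  then show ?thesis using finite_permutations[of "{1..n}"] finite_subset by auto
qed

lemma d_sum:
  assumes "1 \<le> n"
  shows "derangement_poly n = (\<Sum>u\<in>{1..n}. Dp n u)"
proof -
  have "derangement_poly n = (\<Sum>u\<in>{1..n}. \<Sum>s\<in>{s \<in> derangements n. s n = u}. monom 1 (exc n s))"
    unfolding derangement_poly_def
  proof (rule sum.group[symmetric])
    show "(\<lambda>s. s n) ` derangements n \<subseteq> {1..n}"
    proof
      fix u assume "u \<in> (\<lambda>s. s n) ` derangements n"
      then obtain s where s: "s \<in> derangements n" "u = s n" by auto
      then have "s permutes {1..n}" by (simp add: derangements_def)
      then show "u \<in> {1..n}" using s assms permutes_in_image by fastforce
    qed
  qed (simp_all add: finite_der)
  then show ?thesis by (simp add: Dp_def)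
qed

lemma Dp_nn: "1 \<le> n \<Longrightarrow> Dp n n = 0"
proof -
  assume "1 \<le> n"
  then have E: "{s \<in> derangements n. s n = n} = {}" by (auto simp: derangements_def)
  show ?thesis unfolding Dp_def E by simp
qed

lemma d_zero: "derangement_poly 0 = 1"
proof -
  have "derangements 0 = {id}" by (auto simp: derangements_def)
  then show ?thesis by (simp add: derangement_poly_def exc_def)
qed

definition Xp :: "int poly" where "Xp = monom 1 1"

lemma monom_Suc_X: "monom (1::int) (Suc e) = Xp * monom 1 e"
  by (simp add: mult_monom Xp_def)

lemma Ede_split:
  assumes "1 \<le> n"
  shows "{t \<in> Ede n. t n \<noteq> n} = derangements n" "{t \<in> Ede n. t n = n} = derangements (n - 1)"
proof -
  show "{t \<in> Ede n. t n \<noteq> n} = derangements n"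
  proof (intro set_eqI iffI)
    fix t assume "t \<in> {t \<in> Ede n. t n \<noteq> n}"
    then show "t \<in> derangements n" using assms
      by (auto simp: Ede_def derangements_def)
  next
    fix t assume "t \<in> derangements n"
    then show "t \<in> {t \<in> Ede n. t n \<noteq> n}" using assms by (auto simp: Ede_def derangements_def)
  qed
  show "{t \<in> Ede n. t n = n} = derangements (n - 1)"
  proof (intro set_eqI iffI)
    fix t assume t: "t \<in> {t \<in> Ede n. t n = n}"
    then have tp: "t permutes {1..n}" and tf: "\<forall>i\<in>{1..<n}. t i \<noteq> i" and tn: "t n = n"
      by (auto simp: Ede_def)
    have "t permutes {1..n-1}"
    proof (rule permutes_superset[OF tp])
      fix x assume "x \<in> {1..n} - {1..n-1}"
      then have "x = n" by auto
      then show "t x = x" using tn by simp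
    qed
    moreover have "\<forall>i\<in>{1..n-1}. t i \<noteq> i" using tf assms by auto
    ultimately show "t \<in> derangements (n - 1)" by (simp add: derangements_def)
  next
    fix t assume t: "t \<in> derangements (n - 1)"
    then have tp: "t permutes {1..n-1}" and tf: "\<forall>i\<in>{1..n-1}. t i \<noteq> i" by (auto simp: derangements_def)
    have "t permutes {1..n}" by (rule permutes_subset[OF tp]) auto
    moreover have "t n = n" using permutes_not_in[OF tp, of n] assms by auto
    moreover have "\<forall>i\<in>{1..<n}. t i \<noteq> i" using tf assms by auto
    ultimately show "t \<in> {t \<in> Ede n. t n = n}" by (simp add: Ede_def)
  qed
qed

lemma exc_pred:
  assumes "1 \<le> n" "t permutes {1..n-1}"
  shows "exc n t = exc (n - 1) t"
proof -
  have "t n = n" using permutes_not_in[OF assms(2), of n] assms(1) by auto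
  have "{1..n} = insert n {1..n-1}" using assms(1) by auto
  then have "{i\<in>{1..n}. t i > i} = {i\<in>{1..n-1}. t i > i}" using \<open>t n = n\<close> by auto
  then show ?thesis by (simp add: exc_def)
qed

lemma D_rec:
  assumes v: "1 \<le> v" "v \<le> n"
  shows "Dp (Suc n) v = Xp * derangement_poly (n - 1)
           + (\<Sum>u\<in>{1..n}. if v \<le> u then Xp * Dp n u else Dp n u)"
proof -
  interpret dv n v using v by unfold_locales
  have n1: "1 \<le> n" using v by simp
  let ?g = "\<lambda>t. monom (1::int) (exc n t + (if v \<le> t n then 1 else 0))"
  have "Dp (Suc n) v = (\<Sum>t\<in>Ede n. monom 1 (exc (Suc n) (ins n v t)))"
    unfolding Dp_def by (rule sum.reindex_bij_betw[OF bij_ins, symmetric])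
  also have "\<dots> = (\<Sum>t\<in>Ede n. ?g t)"
    by (rule sum.cong[OF refl]) (simp add: exc_ins)
  also have "\<dots> = (\<Sum>t\<in>{t \<in> Ede n. t n \<noteq> n}. ?g t) + (\<Sum>t\<in>{t \<in> Ede n. t n = n}. ?g t)"
  proof -
    have "Ede n = {t \<in> Ede n. t n \<noteq> n} \<union> {t \<in> Ede n. t n = n}" by auto
    then show ?thesis using finite_Ede[of n] by (subst sum.union_disjoint[symmetric]) auto
  qed
  also have "(\<Sum>t\<in>{t \<in> Ede n. t n = n}. ?g t) = Xp * derangement_poly (n - 1)"
  proof -
    have "(\<Sum>t\<in>{t \<in> Ede n. t n = n}. ?g t) = (\<Sum>t\<in>derangements (n-1). Xp * monom 1 (exc (n-1) t))"
      unfolding Ede_split(2)[OF n1]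
    proof (rule sum.cong[OF refl])
      fix t assume t: "t \<in> derangements (n - 1)"
      then have tp: "t permutes {1..n-1}" by (simp add: derangements_def)
      have "t n = n" using permutes_not_in[OF tp, of n] n1 by auto
      then show "?g t = Xp * monom 1 (exc (n-1) t)"
        using v exc_pred[OF n1 tp] by (simp add: monom_Suc_X)
    qed
    then show ?thesis by (simp add: derangement_poly_def sum_distrib_left)
  qed
  also have "(\<Sum>t\<in>{t \<in> Ede n. t n \<noteq> n}. ?g t) = (\<Sum>u\<in>{1..n}. if v \<le> u then Xp * Dp n u else Dp n u)"
  proof -
    have "(\<Sum>t\<in>derangements n. ?g t) = (\<Sum>u\<in>{1..n}. \<Sum>t\<in>{t \<in> derangements n. t n = u}. ?g t)"
    proof (rule sum.group[symmetric])
      show "(\<lambda>s. s n) ` derangements n \<subseteq> {1..n}"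
      proof
        fix u assume "u \<in> (\<lambda>s. s n) ` derangements n"
        then obtain s where s: "s \<in> derangements n" "u = s n" by auto
        then have "s permutes {1..n}" by (simp add: derangements_def)
        then show "u \<in> {1..n}" using s n1 permutes_in_image by fastforce
      qed
    qed (simp_all add: finite_der)
    also have "\<dots> = (\<Sum>u\<in>{1..n}. if v \<le> u then Xp * Dp n u else Dp n u)"
    proof (rule sum.cong[OF refl])
      fix u
      show "(\<Sum>t\<in>{t \<in> derangements n. t n = u}. ?g t) = (if v \<le> u then Xp * Dp n u else Dp n u)"
        by (auto simp: Dp_def sum_distrib_left monom_Suc_X intro!: sum.cong)
    qed
    finally show ?thesis unfolding Ede_split(1)[OF n1] .
  qed
  finally show ?thesis by (simp add: add.commute)
qed

lemma trn_char:
  fixes p q e e' :: int and L :: nat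
  defines "K \<equiv> int L + 1"
  assumes e': "0 \<le> e'" "e' \<le> int L" and e: "0 \<le> e" "e \<le> int L + 1"
  shows "((K+1) * (p*K + e') < K * (q*(K+1) + e) \<and> K * (q*(K+1) + e) < (K+1) * (p*K + e') + K*(K+1))
     \<longleftrightarrow> (q = p \<and> e' < e) \<or> (q = p + 1 \<and> e \<le> e' \<and> 1 \<le> e')"
proof -
  define M where "M = K * (K+1)"
  define D where "D = e' * (K+1) - K * e"
  define t where "t = q - p"
  have K1: "K \<ge> 1" by (simp add: K_def)
  have Mpos: "M > 0" using K1 by (simp add: M_def)
  have id1: "(K+1) * (p*K + e') = p*M + e'*(K+1)" by (simp add: M_def algebra_simps)
  have id2: "K * (q*(K+1) + e) = q*M + K*e" by (simp add: M_def algebra_simps)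
  have c1: "(K+1) * (p*K + e') < K * (q*(K+1) + e) \<longleftrightarrow> D < t*M"
    unfolding id1 id2 by (simp add: D_def t_def algebra_simps)
  have c2: "K * (q*(K+1) + e) < (K+1) * (p*K + e') + K*(K+1) \<longleftrightarrow> (t-1)*M < D"
    unfolding id1 id2 by (simp add: D_def t_def M_def algebra_simps)
  have MK: "M = K*K + K" by (simp add: M_def algebra_simps)
  have Dlo: "- M < D"
  proof -
    have a: "e' * (K+1) \<ge> 0" using e' K1 by simp
    have b: "K * e \<le> K * K" using e K1 by (intro mult_left_mono) (simp_all add: K_def)
    have "-(K*K) \<le> D" unfolding D_def using a b by linarith
    then show ?thesis using MK K1 by linarith
  qed
  have Dhi: "D < M"
  proof -
    have a: "e' * (K+1) \<le> (K - 1) * (K+1)" using e' K1 by (intro mult_right_mono) (simp_all add: K_def)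
    have b: "K * e \<ge> 0" using e K1 by simp
    have c: "(K - 1) * (K+1) = K*K - 1" by (simp add: algebra_simps)
    have "D \<le> K*K - 1" unfolding D_def using a b c by linarith
    then show ?thesis using MK K1 by linarith
  qed
  have Dform: "D = K * (e' - e) + e'" by (simp add: D_def algebra_simps)
  have Dneg: "D < 0 \<longleftrightarrow> e' < e"
  proof
    assume "e' < e"
    then have "K * (e' - e) \<le> K * (-1)" using K1 by (intro mult_left_mono) auto
    then show "D < 0" using Dform e' by (simp add: K_def)
  next
    assume "D < 0"
    show "e' < e"
    proof (rule ccontr)
      assume "\<not> e' < e"
      then have "K * (e' - e) \<ge> 0" using K1 by simp
      then show False using \<open>D < 0\<close> Dform e' by simp
    qed
  qed
  have Dpos: "D > 0 \<longleftrightarrow> e \<le> e' \<and> 1 \<le> e'"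
  proof
    assume "D > 0"
    then have "\<not> e' < e" using Dneg by simp
    moreover have "e' \<noteq> 0"
    proof
      assume "e' = 0"
      then have "e = 0" using \<open>\<not> e' < e\<close> e by simp
      then show False using \<open>D > 0\<close> \<open>e' = 0\<close> by (simp add: D_def)
    qed
    ultimately show "e \<le> e' \<and> 1 \<le> e'" using e' by simp
  next
    assume a: "e \<le> e' \<and> 1 \<le> e'"
    then have "K * (e' - e) \<ge> 0" using K1 by simp
    then show "D > 0" using Dform a by simp
  qed
  have tcases: "t \<le> -1 \<or> t = 0 \<or> t = 1 \<or> t \<ge> 2" by linarith
  have "(D < t*M \<and> (t-1)*M < D) \<longleftrightarrow> (t = 0 \<and> D < 0) \<or> (t = 1 \<and> D > 0)"
  proof -
    { assume "t \<le> -1"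
      then have "t * M \<le> (-1) * M" using Mpos by (intro mult_right_mono) auto
      then have "\<not> D < t*M" using Dlo by simp }
    moreover
    { assume "t \<ge> 2"
      then have "(t-1) * M \<ge> 1 * M" using Mpos by (intro mult_right_mono) auto
      then have "\<not> (t-1)*M < D" using Dhi by simp }
    ultimately show ?thesis using tcases Dlo Dhi by auto
  qed
  then show ?thesis unfolding c1 c2 Dneg Dpos t_def by auto
qed

definition trn :: "nat \<Rightarrow> int \<Rightarrow> int \<Rightarrow> bool" where
  "trn L b a \<longleftrightarrow> (int L + 2) * b < (int L + 1) * a \<and> (int L + 1) * a < (int L + 2) * b + (int L + 1) * (int L + 2)"

definition lastv :: "int list \<Rightarrow> int" where
  "lastv xs = (if xs = [] then 0 else last xs)"

fun TL :: "nat \<Rightarrow> int list set" where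
  "TL 0 = {[]}"
| "TL (Suc L) = (\<lambda>(xs, a). xs @ [a]) ` (SIGMA xs:TL L. {a. trn L (lastv xs) a})"

lemma lastv_snoc[simp]: "lastv (xs @ [a]) = a" by (simp add: lastv_def)

lemma trn_bound:
  assumes b: "0 \<le> b" "b \<le> int L * (int L + 1)" and t: "trn L b a"
  shows "0 < a \<and> a \<le> (int L + 1) * (int L + 2)"
proof -
  have K: "int L + 1 > 0" by simp
  have t1: "(int L + 2) * b < (int L + 1) * a" and t2: "(int L + 1) * a < (int L + 2) * b + (int L + 1) * (int L + 2)"
    using t by (auto simp: trn_def)
  have "(int L + 2) * b \<ge> 0" using b by simp
  then have "(int L + 1) * a > 0" using t1 by linarith
  then have a0: "a > 0" using K by (simp add: zero_less_mult_iff)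
  have "(int L + 2) * b \<le> (int L + 2) * (int L * (int L + 1))" using b by (intro mult_left_mono) auto
  then have "(int L + 1) * a < (int L + 1) * ((int L + 1) * (int L + 2))"
    using t2 by (simp add: algebra_simps)
  then have "a < (int L + 1) * (int L + 2)" using K by (simp add: mult_less_cancel_left_pos)
  then show ?thesis using a0 by simp
qed

lemma TL_props:
  "xs \<in> TL L \<Longrightarrow> length xs = L \<and> 0 \<le> lastv xs \<and> lastv xs \<le> int L * (int L + 1)"
proof (induction L arbitrary: xs)
  case 0 then show ?case by (simp add: lastv_def)
next
  case (Suc L)
  then obtain ys a where ys: "ys \<in> TL L" "trn L (lastv ys) a" "xs = ys @ [a]" by auto
  have "0 < a \<and> a \<le> (int L + 1) * (int L + 2)" using trn_bound Suc.IH[OF ys(1)] ys(2) by blast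
  then show ?case using Suc.IH[OF ys(1)] ys(3) by (simp add: algebra_simps)
qed

lemma finite_trn:
  assumes "0 \<le> b" "b \<le> int L * (int L + 1)"
  shows "finite {a. trn L b a}"
proof -
  have "{a. trn L b a} \<subseteq> {0..(int L + 1) * (int L + 2)}" using trn_bound[OF assms] by fastforce
  then show ?thesis by (rule finite_subset) simp
qed

lemma finite_TL: "finite (TL L)"
proof (induction L)
  case 0 then show ?case by simp
next
  case (Suc L)
  have "finite (SIGMA xs:TL L. {a. trn L (lastv xs) a})"
    using Suc finite_trn TL_props by (intro finite_SigmaI) auto
  then show ?case by simp
qed

definition W :: "nat \<Rightarrow> int \<Rightarrow> int poly" where
  "W L e = (\<Sum>xs\<in>TL L. if lastv xs mod (int L + 1) = e then monom 1 (nat (lastv xs div (int L + 1))) else 0)"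

definition cf :: "int \<Rightarrow> int \<Rightarrow> int poly" where
  "cf e e' = (if e' < e then 1 else 0) + (if e \<le> e' \<and> 1 \<le> e' then Xp else 0)"

lemma inner_sum:
  fixes L :: nat and b e :: int
  defines "K \<equiv> int L + 1"
  assumes b: "0 \<le> b" "b \<le> int L * (int L + 1)" and e: "0 \<le> e" "e \<le> int L + 1"
  shows "(\<Sum>a\<in>{a. trn L b a}. if a mod (K+1) = e then monom 1 (nat (a div (K+1))) else 0)
       = cf e (b mod K) * monom 1 (nat (b div K))"
proof -
  define p where "p = b div K"
  define e' where "e' = b mod K"
  have K0: "K > 0" by (simp add: K_def)
  have bpe: "b = p * K + e'" by (simp add: p_def e'_def)
  have e'r: "0 \<le> e'" "e' \<le> int L" using K0 pos_mod_bound[of K b] by (simp_all add: e'_def K_def)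
  have p0: "p \<ge> 0" using b K0 by (simp add: p_def pos_imp_zdiv_nonneg_iff)
  have set: "{a. trn L b a \<and> a mod (K+1) = e} =
     (if e' < e then {p*(K+1)+e} else {}) \<union> (if e \<le> e' \<and> 1 \<le> e' then {(p+1)*(K+1)+e} else {})"
  proof (intro set_eqI iffI)
    fix a assume a: "a \<in> {a. trn L b a \<and> a mod (K+1) = e}"
    define q where "q = a div (K+1)"
    have aq: "a = q * (K+1) + e" using a div_mult_mod_eq[of a "K+1"] by (simp add: q_def)
    have "trn L b a" using a by simp
    then have "(K+1) * (p*K + e') < K * (q*(K+1) + e) \<and> K * (q*(K+1) + e) < (K+1) * (p*K + e') + K*(K+1)"
      unfolding trn_def bpe[symmetric] aq[symmetric] by (simp add: K_def algebra_simps)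
    then have "(q = p \<and> e' < e) \<or> (q = p + 1 \<and> e \<le> e' \<and> 1 \<le> e')"
      using trn_char[OF e'r e, of p q] by (simp add: K_def)
    then show "a \<in> (if e' < e then {p*(K+1)+e} else {}) \<union> (if e \<le> e' \<and> 1 \<le> e' then {(p+1)*(K+1)+e} else {})"
      using aq by auto
  next
    fix a assume a: "a \<in> (if e' < e then {p*(K+1)+e} else {}) \<union> (if e \<le> e' \<and> 1 \<le> e' then {(p+1)*(K+1)+e} else {})"
    then obtain q where q: "(q = p \<and> e' < e) \<or> (q = p + 1 \<and> e \<le> e' \<and> 1 \<le> e')" and aq: "a = q * (K+1) + e"
      by (auto split: if_splits)
    have "(K+1) * (p*K + e') < K * (q*(K+1) + e) \<and> K * (q*(K+1) + e) < (K+1) * (p*K + e') + K*(K+1)"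
      using trn_char[OF e'r e, of p q] q by (simp add: K_def)
    then have "trn L b a" unfolding trn_def bpe[symmetric] aq[symmetric] by (simp add: K_def algebra_simps)
    moreover have "a mod (K+1) = e" using aq e by (simp add: K_def)
    ultimately show "a \<in> {a. trn L b a \<and> a mod (K+1) = e}" by simp
  qed
  have fin: "finite {a. trn L b a}" using finite_trn[OF b] .
  have "(\<Sum>a\<in>{a. trn L b a}. if a mod (K+1) = e then monom 1 (nat (a div (K+1))) else 0)
      = (\<Sum>a\<in>{a \<in> {a. trn L b a}. a mod (K+1) = e}. monom 1 (nat (a div (K+1))))"
    by (rule sum.inter_filter[OF fin, symmetric])
  also have "{a \<in> {a. trn L b a}. a mod (K+1) = e} = {a. trn L b a \<and> a mod (K+1) = e}" by simp
  also have "(\<Sum>a\<in>{a. trn L b a \<and> a mod (K+1) = e}. monom 1 (nat (a div (K+1))))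
      = (if e' < e then monom 1 (nat p) else 0) + (if e \<le> e' \<and> 1 \<le> e' then monom 1 (nat (p+1)) else 0)"
  proof -
    have d1: "(p*(K+1)+e) div (K+1) = p" using e K0 by (simp add: K_def)
    have d2: "((p+1)*(K+1)+e) div (K+1) = p + 1" using e K0 by (simp add: K_def)
    have ne: "p*(K+1)+e \<noteq> (p+1)*(K+1)+e" using K0 by (simp add: algebra_simps)
    show ?thesis unfolding set using d1 d2 ne by (auto simp: sum.union_disjoint)
  qed
  also have "monom (1::int) (nat (p+1)) = Xp * monom 1 (nat p)"
    using p0 by (simp add: Xp_def mult_monom nat_add_distrib)
  finally show ?thesis by (simp add: cf_def p_def e'_def distrib_right)
qed

lemma W_rec:
  assumes e: "0 \<le> e" "e \<le> int L + 1"
  shows "W (Suc L) e = (\<Sum>e'\<in>{0..int L}. cf e e' * W L e')"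
proof -
  define K where "K = int L + 1"
  define h where "h = (\<lambda>a. if a mod (K+1) = e then monom (1::int) (nat (a div (K+1))) else 0)"
  define S where "S = (SIGMA xs:TL L. {a. trn L (lastv xs) a})"
  have KS: "int (Suc L) + 1 = K + 1" by (simp add: K_def)
  have inj: "inj_on (\<lambda>(xs, a). xs @ [a]) S" by (auto simp: inj_on_def)
  have finS: "finite (TL L)" by (rule finite_TL)
  have "W (Suc L) e = (\<Sum>ys\<in>TL (Suc L). h (lastv ys))" unfolding W_def KS h_def by (rule refl)
  also have "\<dots> = (\<Sum>p\<in>S. h (lastv ((\<lambda>(xs, a). xs @ [a]) p)))"
    unfolding TL.simps S_def[symmetric] by (rule sum.reindex[OF inj, unfolded comp_def])
  also have "\<dots> = (\<Sum>(xs,a)\<in>S. h a)" by (simp add: case_prod_unfold)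
  also have "\<dots> = (\<Sum>xs\<in>TL L. \<Sum>a\<in>{a. trn L (lastv xs) a}. h a)"
    unfolding S_def by (rule sum.Sigma[symmetric]) (use finS finite_trn TL_props in auto)
  also have "\<dots> = (\<Sum>xs\<in>TL L. cf e (lastv xs mod K) * monom 1 (nat (lastv xs div K)))"
  proof (rule sum.cong[OF refl])
    fix xs assume "xs \<in> TL L"
    then have b: "0 \<le> lastv xs" "lastv xs \<le> int L * (int L + 1)" using TL_props by auto
    show "(\<Sum>a\<in>{a. trn L (lastv xs) a}. h a) = cf e (lastv xs mod K) * monom 1 (nat (lastv xs div K))"
      unfolding h_def K_def by (rule inner_sum[OF b e])
  qed
  also have "\<dots> = (\<Sum>e'\<in>{0..int L}. \<Sum>xs\<in>{xs \<in> TL L. lastv xs mod K = e'}. cf e (lastv xs mod K) * monom 1 (nat (lastv xs div K)))"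
  proof (rule sum.group[symmetric])
    show "(\<lambda>xs. lastv xs mod K) ` TL L \<subseteq> {0..int L}"
      using pos_mod_bound[of K] pos_mod_sign[of K] by (auto simp: K_def)
  qed (simp_all add: finS)
  also have "\<dots> = (\<Sum>e'\<in>{0..int L}. cf e e' * W L e')"
  proof (rule sum.cong[OF refl])
    fix e' :: int
    have "(\<Sum>xs\<in>{xs \<in> TL L. lastv xs mod K = e'}. cf e (lastv xs mod K) * monom 1 (nat (lastv xs div K)))
        = cf e e' * (\<Sum>xs\<in>{xs \<in> TL L. lastv xs mod K = e'}. monom 1 (nat (lastv xs div K)))"
      by (simp add: sum_distrib_left)
    also have "(\<Sum>xs\<in>{xs \<in> TL L. lastv xs mod K = e'}. monom 1 (nat (lastv xs div K))) = W L e'"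
      unfolding W_def K_def by (rule sum.inter_filter[OF finS])
    finally show "(\<Sum>xs\<in>{xs \<in> TL L. lastv xs mod K = e'}. cf e (lastv xs mod K) * monom 1 (nat (lastv xs div K)))
        = cf e e' * W L e'" .
  qed
  finally show ?thesis .
qed

lemma sum_int_range: "(\<Sum>e\<in>{1..int m}. f e) = (\<Sum>u\<in>{1..m}. f (int u))"
proof -
  have "{1..int m} = int ` {1..m}" using image_int_atLeastAtMost[of 1 m] by simp
  then show ?thesis by (simp add: sum.reindex)
qed

lemma sum_int_range0: "(\<Sum>e\<in>{0..int m}. f e) = f 0 + (\<Sum>u\<in>{1..m}. f (int u))"
proof -
  have "{0..int m} = insert 0 {1..int m}" by auto
  then show ?thesis by (simp add: sum_int_range)
qed

lemma W_zero: "W 0 0 = 1"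
  by (simp add: W_def lastv_def)

lemma sum_Suc_top: "1 \<le> n \<Longrightarrow> (\<Sum>u\<in>{1..n}. Dp n u) = (\<Sum>u\<in>{1..n-1}. Dp n u)"
proof -
  assume n: "1 \<le> n"
  have "{1..n} = insert n {1..n-1}" using n by auto
  moreover have "n \<notin> {1..n-1}" using n by auto
  ultimately show ?thesis using Dp_nn[OF n] by simp
qed

lemma W_D: "W m 0 = derangement_poly m \<and> (\<forall>u\<in>{1..m}. Xp * W m (int u) = Dp (Suc m) u)"
proof (induction m)
  case 0 then show ?case by (simp add: W_zero d_zero)
next
  case (Suc m)
  have IH0: "W m 0 = derangement_poly m" and IH: "\<And>u. u \<in> {1..m} \<Longrightarrow> Xp * W m (int u) = Dp (Suc m) u"
    using Suc.IH by auto
  have part0: "W (Suc m) 0 = derangement_poly (Suc m)"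
  proof -
    have "W (Suc m) 0 = (\<Sum>e'\<in>{0..int m}. cf 0 e' * W m e')" by (rule W_rec) simp_all
    also have "\<dots> = (\<Sum>u\<in>{1..m}. Xp * W m (int u))"
      by (simp add: sum_int_range0 cf_def)
    also have "\<dots> = (\<Sum>u\<in>{1..m}. Dp (Suc m) u)" using IH by simp
    also have "\<dots> = (\<Sum>u\<in>{1..Suc m}. Dp (Suc m) u)" using sum_Suc_top[of "Suc m"] by simp
    also have "\<dots> = derangement_poly (Suc m)" by (simp add: d_sum)
    finally show ?thesis .
  qed
  have partu: "Xp * W (Suc m) (int v) = Dp (Suc (Suc m)) v" if v: "v \<in> {1..Suc m}" for v
  proof -
    have "Xp * W (Suc m) (int v) = Xp * (\<Sum>e'\<in>{0..int m}. cf (int v) e' * W m e')"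
      using v by (subst W_rec) simp_all
    also have "\<dots> = Xp * W m 0 + (\<Sum>u\<in>{1..m}. cf (int v) (int u) * (Xp * W m (int u)))"
      using v by (simp add: sum_int_range0 cf_def distrib_left sum_distrib_left algebra_simps)
    also have "\<dots> = Xp * derangement_poly m + (\<Sum>u\<in>{1..m}. if v \<le> u then Xp * Dp (Suc m) u else Dp (Suc m) u)"
      using IH0 IH by (auto simp: cf_def intro!: sum.cong)
    also have "(\<Sum>u\<in>{1..m}. if v \<le> u then Xp * Dp (Suc m) u else Dp (Suc m) u)
        = (\<Sum>u\<in>{1..Suc m}. if v \<le> u then Xp * Dp (Suc m) u else Dp (Suc m) u)"
      using Dp_nn[of "Suc m"] by simp
    also have "Xp * derangement_poly m + (\<Sum>u\<in>{1..Suc m}. if v \<le> u then Xp * Dp (Suc m) u else Dp (Suc m) u)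
        = Dp (Suc (Suc m)) v"
      using D_rec[of v "Suc m"] v by simp
    finally show ?thesis .
  qed
  show ?case using part0 partu by blast
qed

definition prevv :: "int list \<Rightarrow> nat \<Rightarrow> int" where
  "prevv xs j = (if j = 0 then 0 else xs ! (j - 1))"

lemma TL_char: "xs \<in> TL L \<longleftrightarrow> length xs = L \<and> (\<forall>j<L. trn j (prevv xs j) (xs ! j))"
proof (induction L arbitrary: xs)
  case 0 then show ?case by simp
next
  case (Suc L)
  show ?case
  proof
    assume "xs \<in> TL (Suc L)"
    then obtain ys a where ys: "ys \<in> TL L" "trn L (lastv ys) a" "xs = ys @ [a]" by auto
    have len: "length ys = L" and tr: "\<forall>j<L. trn j (prevv ys j) (ys ! j)" using Suc.IH ys(1) by auto
    have "trn j (prevv xs j) (xs ! j)" if j: "j < Suc L" for j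
    proof (cases "j < L")
      case True
      then have "prevv xs j = prevv ys j" "xs ! j = ys ! j" using ys(3) len
        by (auto simp: prevv_def nth_append)
      then show ?thesis using tr True by simp
    next
      case False
      then have jL: "j = L" using j by simp
      have "xs ! j = a" using ys(3) len jL by (simp add: nth_append)
      moreover have "prevv xs j = lastv ys"
        using ys(3) len jL by (cases ys rule: rev_cases) (auto simp: prevv_def lastv_def nth_append)
      ultimately show ?thesis using ys(2) jL by simp
    qed
    then show "length xs = Suc L \<and> (\<forall>j<Suc L. trn j (prevv xs j) (xs ! j))" using ys(3) len by simp
  next
    assume a: "length xs = Suc L \<and> (\<forall>j<Suc L. trn j (prevv xs j) (xs ! j))"
    then obtain ys b where xs: "xs = ys @ [b]" by (cases xs rule: rev_cases) auto
    have len: "length ys = L" using a xs by simp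
    have "\<forall>j<L. trn j (prevv ys j) (ys ! j)"
    proof (intro allI impI)
      fix j assume j: "j < L"
      have "prevv xs j = prevv ys j" "xs ! j = ys ! j" using xs len j
        by (auto simp: prevv_def nth_append)
      moreover have "trn j (prevv xs j) (xs ! j)" using a j by simp
      ultimately show "trn j (prevv ys j) (ys ! j)" by simp
    qed
    then have ysT: "ys \<in> TL L" using Suc.IH len by simp
    have "prevv xs L = lastv ys"
      using xs len by (cases ys rule: rev_cases) (auto simp: prevv_def lastv_def nth_append)
    moreover have "xs ! L = b" using xs len by (simp add: nth_append)
    ultimately have "trn L (lastv ys) b" using a by auto
    then show "xs \<in> TL (Suc L)" using ysT xs by auto
  qed
qed

lemma trn_real: "trn L b a \<longleftrightarrow> (real L + 2) * real_of_int b < (real L + 1) * real_of_int a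
   \<and> (real L + 1) * real_of_int a < (real L + 2) * real_of_int b + (real L + 1) * (real L + 2)"
proof -
  have "trn L b a \<longleftrightarrow> real_of_int ((int L + 2) * b) < real_of_int ((int L + 1) * a)
     \<and> real_of_int ((int L + 1) * a) < real_of_int ((int L + 2) * b + (int L + 1) * (int L + 2))"
    unfolding trn_def of_int_less_iff ..
  then show ?thesis by simp
qed

lemma sum_v:
  assumes "j \<le> m"
  shows "(\<Sum>i\<le>m. c i * real_of_int (lecture_hall_vertex (\<lambda>j::nat. int j + 2) i j)) = (real j + 2) * (\<Sum>i\<le>j. c i)"
proof -
  have "(\<Sum>i\<le>m. c i * real_of_int (lecture_hall_vertex (\<lambda>j::nat. int j + 2) i j))
      = (\<Sum>i\<le>m. if i \<le> j then c i * (real j + 2) else 0)"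
    by (rule sum.cong) (auto simp: lecture_hall_vertex_def)
  also have "\<dots> = (\<Sum>i\<in>{i\<in>{..m}. i \<le> j}. c i * (real j + 2))"
    by (rule sum.inter_filter[symmetric]) simp
  also have "{i\<in>{..m}. i \<le> j} = {..j}" using assms by auto
  finally show ?thesis by (simp add: sum_distrib_right mult.commute)
qed

lemma lh_geo:
  fixes m :: nat
  fixes x :: "int list"
  fixes k :: int
  assumes m: "1 \<le> m"
  shows "(length x = m \<and> (\<exists>c::nat\<Rightarrow>real. (\<forall>i\<le>m. 0 < c i \<and> c i < 1) \<and>
            (\<forall>j<m. real_of_int (x ! j) = (\<Sum>i\<le>m. c i * real_of_int (lecture_hall_vertex (\<lambda>j::nat. int j + 2) i j))) \<and>
            real_of_int k = (\<Sum>i\<le>m. c i)))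
     \<longleftrightarrow> (x \<in> TL m \<and> lastv x < (int m + 1) * k \<and> (int m + 1) * k < lastv x + (int m + 1))"
proof
  assume a: "length x = m \<and> (\<exists>c::nat\<Rightarrow>real. (\<forall>i\<le>m. 0 < c i \<and> c i < 1) \<and>
            (\<forall>j<m. real_of_int (x ! j) = (\<Sum>i\<le>m. c i * real_of_int (lecture_hall_vertex (\<lambda>j::nat. int j + 2) i j))) \<and>
            real_of_int k = (\<Sum>i\<le>m. c i))"
  then obtain c :: "nat \<Rightarrow> real" where len: "length x = m" and cb: "\<forall>i\<le>m. 0 < c i \<and> c i < 1"
    and cx: "\<forall>j<m. real_of_int (x ! j) = (\<Sum>i\<le>m. c i * real_of_int (lecture_hall_vertex (\<lambda>j::nat. int j + 2) i j))"
    and ck: "real_of_int k = (\<Sum>i\<le>m. c i)" by blast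
  define S where "S j = (\<Sum>i\<le>j. c i)" for j
  define P where "P j = (if j = 0 then 0 else S (j - 1))" for j
  have xj: "real_of_int (x ! j) = (real j + 2) * S j" if "j < m" for j
    using cx that sum_v[of j m c] by (simp add: S_def)
  have SP: "S j = P j + c j" for j
    by (cases j) (simp_all add: S_def P_def)
  have prev: "real_of_int (prevv x j) = (real j + 1) * P j" if "j \<le> m" for j
  proof (cases j)
    case 0 then show ?thesis by (simp add: prevv_def P_def)
  next
    case (Suc j')
    then have "j' < m" using that by simp
    then show ?thesis using xj[of j'] Suc by (simp add: prevv_def P_def algebra_simps)
  qed
  have trj: "trn j (prevv x j) (x ! j)" if j: "j < m" for j
  proof -
    have c0: "0 < c j" "c j < 1" using cb j by auto
    have pos: "0 < (real j + 1) * (real j + 2)" by simp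
    have e1: "(real j + 1) * ((real j + 2) * S j) = (real j + 2) * ((real j + 1) * P j) + (real j + 1) * (real j + 2) * c j"
      unfolding SP by (simp add: algebra_simps)
    have "(real j + 1) * (real j + 2) * c j > 0" using pos c0 by simp
    moreover have "(real j + 1) * (real j + 2) * c j < (real j + 1) * (real j + 2)" using pos c0 by simp
    ultimately show ?thesis unfolding trn_real xj[OF j] prev[of j] using j e1
      by (simp add: prev less_imp_le)
  qed
  have xT: "x \<in> TL m" using len trj by (simp add: TL_char)
  have lx: "real_of_int (lastv x) = (real m + 1) * S (m - 1)"
  proof -
    have "x \<noteq> []" using len m by auto
    then have "lastv x = x ! (m - 1)" using len by (simp add: lastv_def last_conv_nth)
    moreover have "real (m - 1) + 2 = real m + 1" using m by simp
    ultimately show ?thesis using xj[of "m - 1"] m by simp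
  qed
  have kS: "real_of_int k = S (m - 1) + c m"
    using ck SP[of m] m by (simp add: S_def P_def)
  have "0 < (real m + 1) * c m" "(real m + 1) * c m < real m + 1" using cb by auto
  then have "real_of_int (lastv x) < (real m + 1) * real_of_int k \<and> (real m + 1) * real_of_int k < real_of_int (lastv x) + (real m + 1)"
    unfolding lx kS by (simp add: algebra_simps)
  then have "real_of_int (lastv x) < real_of_int ((int m + 1) * k) \<and> real_of_int ((int m + 1) * k) < real_of_int (lastv x + (int m + 1))"
    by simp
  then show "x \<in> TL m \<and> lastv x < (int m + 1) * k \<and> (int m + 1) * k < lastv x + (int m + 1)"
    using xT of_int_less_iff by blast
next
  assume a: "x \<in> TL m \<and> lastv x < (int m + 1) * k \<and> (int m + 1) * k < lastv x + (int m + 1)"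
  then have len: "length x = m" and trj: "\<And>j. j < m \<Longrightarrow> trn j (prevv x j) (x ! j)"
    by (auto simp: TL_char)
  define Q where "Q j = (if j < m then real_of_int (x ! j) / (real j + 2) else real_of_int k)" for j
  define c where "c i = Q i - (if i = 0 then 0 else Q (i - 1))" for i
  have tele: "(\<Sum>i\<le>j. c i) = Q j" for j
    by (induction j) (simp_all add: c_def)
  have prevQ: "(if i = 0 then 0 else Q (i - 1)) = real_of_int (prevv x i) / (real i + 1)" if "i < m" for i
  proof (cases i)
    case 0 then show ?thesis by (simp add: prevv_def)
  next
    case (Suc i')
    then show ?thesis using that by (simp add: Q_def prevv_def add.commute)
  qed
  have cb: "0 < c i \<and> c i < 1" if i: "i \<le> m" for i
  proof (cases "i < m")
    case True
    define pp where "pp = real_of_int (prevv x i)"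
    define xi where "xi = real_of_int (x ! i)"
    have ci: "c i = xi / (real i + 2) - pp / (real i + 1)"
      using prevQ[OF True] True by (simp add: c_def Q_def pp_def xi_def)
    have t: "(real i + 2) * pp < (real i + 1) * xi" "(real i + 1) * xi < (real i + 2) * pp + (real i + 1) * (real i + 2)"
      using trj[OF True] unfolding trn_real pp_def xi_def by auto
    have p1: "real i + 1 > 0" "real i + 2 > 0" by simp_all
    have "pp / (real i + 1) < xi / (real i + 2)" using t(1) p1 by (simp add: field_simps)
    moreover have "xi / (real i + 2) < pp / (real i + 1) + 1" using t(2) p1 by (simp add: field_simps)
    ultimately show ?thesis using ci by simp
  next
    case False
    then have im: "i = m" using i by simp
    have lx: "lastv x = x ! (m - 1)"
    proof -
      have "x \<noteq> []" using len m by auto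
      then show ?thesis using len by (simp add: lastv_def last_conv_nth)
    qed
    have ci: "c i = real_of_int k - real_of_int (lastv x) / (real m + 1)"
      using im m lx by (simp add: c_def Q_def)
    have p1: "real m + 1 > 0" by simp
    have f: "real_of_int (lastv x) < (real m + 1) * real_of_int k" "(real m + 1) * real_of_int k < real_of_int (lastv x) + (real m + 1)"
    proof -
      have f1: "lastv x < (int m + 1) * k" "(int m + 1) * k < lastv x + (int m + 1)" using a by auto
      have g1: "real_of_int (lastv x) < real_of_int ((int m + 1) * k)" using f1(1) by (simp only: of_int_less_iff)
      have g2: "real_of_int ((int m + 1) * k) < real_of_int (lastv x + (int m + 1))" using f1(2) by (simp only: of_int_less_iff)
      show "real_of_int (lastv x) < (real m + 1) * real_of_int k" using g1 by simp
      show "(real m + 1) * real_of_int k < real_of_int (lastv x) + (real m + 1)" using g2 by simp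
    qed
    have "real_of_int (lastv x) / (real m + 1) < real_of_int k" using f(1) p1 by (simp add: field_simps)
    moreover have "real_of_int k < real_of_int (lastv x) / (real m + 1) + 1" using f(2) p1 by (simp add: field_simps)
    ultimately show ?thesis using ci by simp
  qed
  have cx: "\<forall>j<m. real_of_int (x ! j) = (\<Sum>i\<le>m. c i * real_of_int (lecture_hall_vertex (\<lambda>j::nat. int j + 2) i j))"
  proof (intro allI impI)
    fix j assume j: "j < m"
    have "(\<Sum>i\<le>m. c i * real_of_int (lecture_hall_vertex (\<lambda>j::nat. int j + 2) i j)) = (real j + 2) * Q j"
      using sum_v[of j m c] j tele[of j] by simp
    also have "\<dots> = real_of_int (x ! j)" using j by (simp add: Q_def)
    finally show "real_of_int (x ! j) = (\<Sum>i\<le>m. c i * real_of_int (lecture_hall_vertex (\<lambda>j::nat. int j + 2) i j))" by simp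
  qed
  have ck: "real_of_int k = (\<Sum>i\<le>m. c i)" using tele[of m] by (simp add: Q_def)
  show "length x = m \<and> (\<exists>c::nat\<Rightarrow>real. (\<forall>i\<le>m. 0 < c i \<and> c i < 1) \<and>
            (\<forall>j<m. real_of_int (x ! j) = (\<Sum>i\<le>m. c i * real_of_int (lecture_hall_vertex (\<lambda>j::nat. int j + 2) i j))) \<and>
            real_of_int k = (\<Sum>i\<le>m. c i))"
    using len cb cx ck by blast
qed

lemma fin_char:
  fixes b k :: int and m :: nat
  assumes b0: "0 \<le> b"
  shows "(b < (int m + 1) * k \<and> (int m + 1) * k < b + (int m + 1)) \<longleftrightarrow>
         (k = b div (int m + 1) + 1 \<and> b mod (int m + 1) \<noteq> 0)"
proof -
  define K where "K = int m + 1"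
  define p where "p = b div K"
  define e' where "e' = b mod K"
  have K1: "K \<ge> 1" by (simp add: K_def)
  have bpe: "b = K * p + e'" by (simp add: p_def e'_def)
  have er: "0 \<le> e'" "e' < K" using K1 by (simp_all add: e'_def)
  define t where "t = k - p"
  have kk: "K * k = K * p + K * t" by (simp add: t_def algebra_simps)
  have "(b < K * k \<and> K * k < b + K) \<longleftrightarrow> (e' < K * t \<and> K * t < e' + K)"
    unfolding bpe kk by auto
  also have "\<dots> \<longleftrightarrow> (t = 1 \<and> e' \<noteq> 0)"
  proof
    assume a: "e' < K * t \<and> K * t < e' + K"
    have "t \<noteq> 0" "\<not> t < 0" "\<not> t \<ge> 2"
    proof -
      show "t \<noteq> 0" using a er by auto
      show "\<not> t < 0"
      proof
        assume "t < 0" then have "K * t < 0" using K1 by (simp add: mult_pos_neg)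
        then show False using a er by simp
      qed
      show "\<not> t \<ge> 2"
      proof
        assume "t \<ge> 2" then have h: "K * t \<ge> K * 2" using K1 by (intro mult_left_mono) auto
        then show False using a er by linarith
      qed
    qed
    then have "t = 1" by simp
    then show "t = 1 \<and> e' \<noteq> 0" using a by simp
  next
    assume "t = 1 \<and> e' \<noteq> 0"
    then show "e' < K * t \<and> K * t < e' + K" using er by simp
  qed
  also have "t = 1 \<longleftrightarrow> k = p + 1" by (auto simp: t_def)
  finally show ?thesis by (simp only: K_def p_def e'_def)
qed

lemma monom_card: "finite A \<Longrightarrow> monom (int (card {x\<in>A. P x})) k = (\<Sum>x\<in>A. if P x then monom 1 k else 0)"
  by (simp add: sum.inter_filter[symmetric] of_nat_monom mult_monom)

lemma lstar_W:
  assumes m: "1 \<le> m"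
  shows "lstar m m (lecture_hall_vertex (\<lambda>j::nat. int j + 2)) = Xp * (\<Sum>u\<in>{1..m}. W m (int u))"
proof -
  define K where "K = int m + 1"
  define fin where "fin x k \<longleftrightarrow> lastv x < K * k \<and> K * k < lastv x + K" for x k
  have finT: "finite (TL m)" by (rule finite_TL)
  have coeff: "lstar_coeff m m (lecture_hall_vertex (\<lambda>j::nat. int j + 2)) k = card {x \<in> TL m. fin x k}" for k
    unfolding lstar_coeff_def fin_def K_def using lh_geo[OF m] by (intro arg_cong[where f = card]) blast
  have bx: "0 \<le> lastv x \<and> lastv x \<le> int m * (int m + 1)" if "x \<in> TL m" for x
    using TL_props[OF that] by simp
  have "lstar m m (lecture_hall_vertex (\<lambda>j::nat. int j + 2))
      = (\<Sum>k\<le>m+1. \<Sum>x\<in>TL m. if fin x (int k) then monom 1 k else 0)"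
    unfolding lstar_def coeff monom_card[OF finT] ..
  also have "\<dots> = (\<Sum>x\<in>TL m. \<Sum>k\<le>m+1. if fin x (int k) then monom 1 k else 0)"
    by (rule sum.swap)
  also have "\<dots> = (\<Sum>x\<in>TL m. if lastv x mod K \<noteq> 0 then Xp * monom 1 (nat (lastv x div K)) else 0)"
  proof (rule sum.cong[OF refl])
    fix x assume x: "x \<in> TL m"
    define p where "p = lastv x div K"
    have p0: "0 \<le> p" using bx[OF x] by (simp add: p_def K_def pos_imp_zdiv_nonneg_iff)
    have pm: "p \<le> int m"
    proof -
      have K0: "K > 0" by (simp add: K_def)
      have "lastv x < K * (int m + 1)" using bx[OF x] by (simp add: K_def algebra_simps)
      moreover have "K * p \<le> lastv x"
      proof -
        have "lastv x = K * p + lastv x mod K" by (simp add: p_def)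
        then show ?thesis using pos_mod_sign[OF K0, of "lastv x"] by linarith
      qed
      ultimately have "K * p < K * (int m + 1)" by linarith
      then show ?thesis using K0 by (simp add: mult_less_cancel_left_pos)
    qed
    have "(\<Sum>k\<le>m+1. if fin x (int k) then monom (1::int) k else 0)
        = (\<Sum>k\<le>m+1. if k = Suc (nat p) then (if lastv x mod K \<noteq> 0 then monom 1 k else 0) else 0)"
    proof (rule sum.cong[OF refl])
      fix k
      have "fin x (int k) \<longleftrightarrow> (int k = p + 1 \<and> lastv x mod K \<noteq> 0)"
        unfolding fin_def p_def K_def using fin_char[of "lastv x" m "int k"] bx[OF x] by linarith
      also have "int k = p + 1 \<longleftrightarrow> k = Suc (nat p)" using p0 by auto
      finally show "(if fin x (int k) then monom (1::int) k else 0) = (if k = Suc (nat p) then (if lastv x mod K \<noteq> 0 then monom 1 k else 0) else 0)"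
        by auto
    qed
    also have "\<dots> = (if lastv x mod K \<noteq> 0 then monom 1 (Suc (nat p)) else 0)"
      using pm by (simp add: sum.delta)
    also have "\<dots> = (if lastv x mod K \<noteq> 0 then Xp * monom 1 (nat (lastv x div K)) else 0)"
      by (simp add: monom_Suc_X p_def)
    finally show "(\<Sum>k\<le>m+1. if fin x (int k) then monom (1::int) k else 0) = (if lastv x mod K \<noteq> 0 then Xp * monom 1 (nat (lastv x div K)) else 0)" .
  qed
  also have "\<dots> = Xp * (\<Sum>u\<in>{1..m}. W m (int u))"
  proof -
    have "(\<Sum>u\<in>{1..m}. W m (int u)) = (\<Sum>x\<in>TL m. \<Sum>u\<in>{1..m}. if lastv x mod K = int u then monom 1 (nat (lastv x div K)) else 0)"
      unfolding W_def K_def by (rule sum.swap)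
    also have "\<dots> = (\<Sum>x\<in>TL m. if lastv x mod K \<noteq> 0 then monom 1 (nat (lastv x div K)) else 0)"
    proof (rule sum.cong[OF refl])
      fix x assume x: "x \<in> TL m"
      define e' where "e' = lastv x mod K"
      have er: "0 \<le> e'" "e' \<le> int m" using pos_mod_bound[of K "lastv x"] by (simp_all add: e'_def K_def)
      have "(\<Sum>u\<in>{1..m}. if e' = int u then monom (1::int) (nat (lastv x div K)) else 0)
          = (\<Sum>u\<in>{1..m}. if u = nat e' then monom 1 (nat (lastv x div K)) else 0)"
        using er by (intro sum.cong refl) auto
      also have "\<dots> = (if e' \<noteq> 0 then monom 1 (nat (lastv x div K)) else 0)"
        using er by (simp add: sum.delta') linarith
      finally show "(\<Sum>u\<in>{1..m}. if lastv x mod K = int u then monom (1::int) (nat (lastv x div K)) else 0)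
          = (if lastv x mod K \<noteq> 0 then monom 1 (nat (lastv x div K)) else 0)" by (simp add: e'_def)
    qed
    finally show ?thesis by (simp add: sum_distrib_left if_distrib cong: if_cong)
  qed
  finally show ?thesis .
qed

theorem theorem4p1:
  fixes n :: nat
  assumes "n \<ge> 2"
  defines "s \<equiv> (\<lambda>j::nat. int j + 2)"
  shows "s_derangement_poly (n - 1) s = derangement_poly n
    \<and> local_h {1..n} barycentric_sd = lstar (n - 1) (n - 1) (lecture_hall_vertex s)"
proof -
  define m where "m = n - 1"
  have m1: "1 \<le> m" and nm: "n = Suc m" using assms(1) by (simp_all add: m_def)
  have "lstar m m (lecture_hall_vertex s) = Xp * (\<Sum>u\<in>{1..m}. W m (int u))"
    unfolding s_def by (rule lstar_W[OF m1])
  also have "\<dots> = (\<Sum>u\<in>{1..m}. Dp (Suc m) u)"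
    using W_D[of m] by (simp add: sum_distrib_left)
  also have "\<dots> = (\<Sum>u\<in>{1..Suc m}. Dp (Suc m) u)" using sum_Suc_top[of "Suc m"] by simp
  also have "\<dots> = derangement_poly (Suc m)" by (simp add: d_sum)
  finally have L: "lstar m m (lecture_hall_vertex s) = derangement_poly n" by (simp add: nm)
  show ?thesis
    using L local_h_derangement[of n] by (simp add: s_derangement_poly_def m_def)
qed

end
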